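(* Let $A\neq\mathbb{C}$ be a unital $C^*$-algebra with a faithful tracial state $\tau$. Then there exist $0<\lambda<1$ and positive elements $e,f\in A$ with $e\perp f$, $d_\tau(e)=\lambda$ and $d_\tau(f)=1-\lambda$.
   Context: $e\perp f$ means $ef=0$. For a trace $\tau$ and positive $a$, $d_\tau(a)=\lim_{n\to\infty}\tau(a^{1/n})$. *)

theory Defs
  imports "HOL-Analysis.Analysis"
begin

text \<open>A unital C*-algebra is modelled on a type 'a that is a real Banach algebra
with unit (norm 1 = 1, submultiplicative norm), together with a complex scalar
multiplication sc (extending the real one) and an involution st satisfying the
C*-identity.\<close>

definition unital_cstar_algebra ::
  "('a::{real_normed_algebra_1,banach} \<Rightarrow> 'a) \<Rightarrow> (complex \<Rightarrow> 'a \<Rightarrow> 'a) \<Rightarrow> bool" where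
  "unital_cstar_algebra st sc \<longleftrightarrow>
     (\<forall>r x. sc (complex_of_real r) x = scaleR r x) \<and>
     (\<forall>a b x. sc a (sc b x) = sc (a * b) x) \<and>
     (\<forall>a b x. sc (a + b) x = sc a x + sc b x) \<and>
     (\<forall>a x y. sc a (x + y) = sc a x + sc a y) \<and>
     (\<forall>a x y. sc a (x * y) = sc a x * y) \<and>
     (\<forall>a x y. sc a (x * y) = x * sc a y) \<and>
     (\<forall>a x. norm (sc a x) = cmod a * norm x) \<and>
     (\<forall>x. st (st x) = x) \<and>
     (\<forall>x y. st (x + y) = st x + st y) \<and>
     (\<forall>x y. st (x * y) = st y * st x) \<and>
     (\<forall>a x. st (sc a x) = sc (cnj a) (st x)) \<and>
     (\<forall>x. norm (st x * x) = (norm x)\<^sup>2)"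

definition cspectrum :: "(complex \<Rightarrow> 'a \<Rightarrow> 'a) \<Rightarrow> 'a::ring_1 \<Rightarrow> complex set" where
  "cspectrum sc a = {c. \<not> (\<exists>b. b * (a - sc c 1) = 1 \<and> (a - sc c 1) * b = 1)}"

definition cpositive :: "('a \<Rightarrow> 'a) \<Rightarrow> (complex \<Rightarrow> 'a \<Rightarrow> 'a) \<Rightarrow> 'a::ring_1 \<Rightarrow> bool" where
  "cpositive st sc a \<longleftrightarrow> st a = a \<and> cspectrum sc a \<subseteq> complex_of_real ` {0..}"

text \<open>a^(1/n) for positive a: the unique positive n-th root (what the continuous
functional calculus of t \<mapsto> t^(1/n) produces).\<close>
definition proot :: "('a \<Rightarrow> 'a) \<Rightarrow> (complex \<Rightarrow> 'a \<Rightarrow> 'a) \<Rightarrow> nat \<Rightarrow> 'a::ring_1 \<Rightarrow> 'a" where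
  "proot st sc n a = (THE b. cpositive st sc b \<and> b ^ n = a)"

definition tracial_state ::
  "('a \<Rightarrow> 'a) \<Rightarrow> (complex \<Rightarrow> 'a \<Rightarrow> 'a) \<Rightarrow> ('a::ring_1 \<Rightarrow> complex) \<Rightarrow> bool" where
  "tracial_state st sc \<tau> \<longleftrightarrow>
     (\<forall>x y. \<tau> (x + y) = \<tau> x + \<tau> y) \<and>
     (\<forall>c x. \<tau> (sc c x) = c * \<tau> x) \<and>
     (\<forall>x y. \<tau> (x * y) = \<tau> (y * x)) \<and>
     (\<forall>x. Im (\<tau> (st x * x)) = 0 \<and> Re (\<tau> (st x * x)) \<ge> 0) \<and>
     \<tau> 1 = 1"

definition faithful :: "('a \<Rightarrow> 'a) \<Rightarrow> ('a::ring_1 \<Rightarrow> complex) \<Rightarrow> bool" where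
  "faithful st \<tau> \<longleftrightarrow> (\<forall>x. \<tau> (st x * x) = 0 \<longrightarrow> x = 0)"

definition dtau_eq :: "('a \<Rightarrow> 'a) \<Rightarrow> (complex \<Rightarrow> 'a \<Rightarrow> 'a) \<Rightarrow> ('a::ring_1 \<Rightarrow> complex) \<Rightarrow> 'a \<Rightarrow> real \<Rightarrow> bool" where
  "dtau_eq st sc \<tau> a r \<longleftrightarrow> (\<lambda>n. \<tau> (proot st sc (Suc n) a)) \<longlonglongrightarrow> complex_of_real r"

end

theory Submission
  imports Defs "HOL-Computational_Algebra.Fundamental_Theorem_Algebra"
begin

locale cstar =
  fixes st :: "'a::{real_normed_algebra_1,banach} \<Rightarrow> 'a" and sc :: "complex \<Rightarrow> 'a \<Rightarrow> 'a"
  assumes cs: "unital_cstar_algebra st sc"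
begin

lemma sc_real: "sc (complex_of_real r) x = r *\<^sub>R x" using cs unfolding unital_cstar_algebra_def by (elim conjE) metis
lemma sc_assoc: "sc a (sc b x) = sc (a * b) x" using cs unfolding unital_cstar_algebra_def by (elim conjE) metis
lemma sc_addl: "sc (a + b) x = sc a x + sc b x" using cs unfolding unital_cstar_algebra_def by (elim conjE) metis
lemma sc_addr: "sc a (x + y) = sc a x + sc a y" using cs unfolding unital_cstar_algebra_def by (elim conjE) metis
lemma sc_multl: "sc a (x * y) = sc a x * y" using cs unfolding unital_cstar_algebra_def by (elim conjE) metis
lemma sc_multr: "sc a (x * y) = x * sc a y" using cs unfolding unital_cstar_algebra_def by (elim conjE) metis
lemma norm_sc: "norm (sc a x) = cmod a * norm x" using cs unfolding unital_cstar_algebra_def by (elim conjE) metis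
lemma st_st[simp]: "st (st x) = x" using cs unfolding unital_cstar_algebra_def by (elim conjE) metis
lemma st_add: "st (x + y) = st x + st y" using cs unfolding unital_cstar_algebra_def by (elim conjE) metis
lemma st_mult: "st (x * y) = st y * st x" using cs unfolding unital_cstar_algebra_def by (elim conjE) metis
lemma st_sc: "st (sc a x) = sc (cnj a) (st x)" using cs unfolding unital_cstar_algebra_def by (elim conjE) metis
lemma cstar_id: "norm (st x * x) = (norm x)\<^sup>2" using cs unfolding unital_cstar_algebra_def by (elim conjE) metis

lemma sc_one[simp]: "sc 1 x = x"
  using sc_real[of 1 x] by simp
lemma sc_zero[simp]: "sc 0 x = 0"
  using sc_real[of 0 x] by simp
lemma sc_minusl: "sc (- a) x = - sc a x"
  using sc_addl[of "-a" a x] by (metis add.commute neg_eq_iff_add_eq_0 sc_zero add.left_inverse)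
lemma sc_diffl: "sc (a - b) x = sc a x - sc b x"
  using sc_addl[of a "-b" x] sc_minusl by simp
lemma sc_zero_right[simp]: "sc a 0 = 0"
  using sc_addr[of a 0 0] by simp
lemma sc_minusr: "sc a (- x) = - sc a x"
  using sc_addr[of a x "-x"] by (metis neg_eq_iff_add_eq_0 sc_zero_right add.right_inverse)
lemma sc_diffr: "sc a (x - y) = sc a x - sc a y"
  using sc_addr[of a x "-y"] sc_minusr by simp
lemma sc_scaleR: "sc a (r *\<^sub>R x) = r *\<^sub>R sc a x"
  by (metis sc_assoc sc_real mult.commute)
lemma sc_1l: "sc a 1 * x = sc a x" by (metis sc_multl mult_1_left)
lemma sc_1r: "x * sc a 1 = sc a x" by (metis sc_multr mult_1_right)
lemma sc_11: "sc a 1 * sc b 1 = sc (a * b) 1" by (metis sc_1l sc_assoc)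
lemma sc_of_real: "sc (complex_of_real r) 1 = of_real r"
  using sc_real[of r 1] by (simp add: scaleR_conv_of_real)
lemma sc_sum: "sc a (sum f A) = (\<Sum>i\<in>A. sc a (f i))"
  by (induction A rule: infinite_finite_induct) (auto simp: sc_addr)
lemma sc_suml: "sc (sum f A) x = (\<Sum>i\<in>A. sc (f i) x)"
  by (induction A rule: infinite_finite_induct) (auto simp: sc_addl)

lemma st_zero[simp]: "st 0 = 0"
  using st_add[of 0 0] by simp
lemma st_one[simp]: "st 1 = 1"
proof -
  have "st 1 = st 1 * st (st 1)" by simp
  also have "\<dots> = st (st 1 * 1)" by (simp only: st_mult)
  finally show ?thesis by simp
qed
lemma st_minus: "st (- x) = - st x"
  using st_add[of x "-x"] by (metis neg_eq_iff_add_eq_0 st_zero add.right_inverse)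
lemma st_diff: "st (x - y) = st x - st y"
  using st_add[of x "-y"] st_minus by simp
lemma st_scaleR: "st (r *\<^sub>R x) = r *\<^sub>R st x"
  by (metis st_sc sc_real complex_cnj_complex_of_real)
lemma st_power: "st (x ^ n) = (st x) ^ n"
  by (induction n) (auto simp: st_mult power_commutes)
lemma st_sum: "st (sum f A) = (\<Sum>i\<in>A. st (f i))"
  by (induction A rule: infinite_finite_induct) (auto simp: st_add)
lemma st_of_real: "st (of_real r) = of_real r"
  by (simp add: of_real_def st_scaleR)
lemma st_sc1: "st (sc a 1) = sc (cnj a) 1" by (simp add: st_sc)

lemma norm_st[simp]: "norm (st x) = norm x"
proof -
  have a: "norm y \<le> norm (st y)" for y
  proof (cases "y = 0")
    case False
    have "(norm y)\<^sup>2 \<le> norm (st y) * norm y"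
      using cstar_id[of y] norm_mult_ineq[of "st y" y] by simp
    thus ?thesis using False by (simp add: power2_eq_square)
  qed simp
  show ?thesis using a[of x] a[of "st x"] by simp
qed

lemma tendsto_st: "(f \<longlongrightarrow> l) F \<Longrightarrow> ((\<lambda>n. st (f n)) \<longlongrightarrow> st l) F"
proof -
  assume "(f \<longlongrightarrow> l) F"
  hence "((\<lambda>n. f n - l) \<longlongrightarrow> 0) F" by (simp add: LIM_zero)
  hence "((\<lambda>n. norm (f n - l)) \<longlongrightarrow> 0) F" by (simp add: tendsto_norm_zero)
  hence "((\<lambda>n. norm (st (f n) - st l)) \<longlongrightarrow> 0) F" by (simp add: st_diff[symmetric])
  thus ?thesis by (simp add: tendsto_norm_zero_iff LIM_zero_iff)
qed

definition sa :: "'a \<Rightarrow> bool" where "sa x \<longleftrightarrow> st x = x"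

lemma norm_sa_sq: "sa h \<Longrightarrow> norm (h * h) = (norm h)\<^sup>2"
  using cstar_id[of h] by (simp add: sa_def)

lemma sa_power: "sa h \<Longrightarrow> sa (h ^ n)" by (simp add: sa_def st_power)

lemma norm_sa_pow2: "sa h \<Longrightarrow> norm (h ^ (2 ^ k)) = norm h ^ (2 ^ k)"
proof (induction k)
  case (Suc k)
  have "h ^ (2 ^ Suc k) = h ^ (2 ^ k) * h ^ (2^k)" by (simp add: power_add[symmetric] mult_2)
  hence "norm (h ^ (2 ^ Suc k)) = (norm (h ^ (2^k)))\<^sup>2"
    using norm_sa_sq[OF sa_power[OF Suc.prems]] by simp
  thus ?case using Suc by (simp add: power_mult[symmetric] mult.commute)
qed simp

lemma norm_sa_power: assumes "sa h" shows "norm (h ^ n) = norm h ^ n"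
proof (cases "h = 0")
  case True thus ?thesis by (cases n) auto
next
  case False
  have le: "norm (h ^ n) \<le> norm h ^ n" by (rule norm_power_ineq)
  obtain k where k: "n \<le> 2 ^ k" using less_exp[of n] less_imp_le by blast
  have "norm h ^ (2^k) = norm (h ^ n * h ^ (2^k - n))"
    using norm_sa_pow2[OF assms, of k] k by (simp add: power_add[symmetric])
  also have "\<dots> \<le> norm (h ^ n) * norm (h ^ (2^k - n))"
    by (rule norm_mult_ineq)
  also have "\<dots> \<le> norm (h ^ n) * norm h ^ (2^k - n)"
    by (rule mult_left_mono[OF norm_power_ineq norm_ge_zero])
  finally have "norm h ^ n * norm h ^ (2^k - n) \<le> norm (h ^ n) * norm h ^ (2^k - n)"
    using k by (simp add: power_add[symmetric])
  hence "norm h ^ n \<le> norm (h ^ n)" using False by (simp add: mult_le_cancel_right)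
  thus ?thesis using le by simp
qed

end

definition isinv :: "'a::ring_1 \<Rightarrow> bool" where "isinv x \<longleftrightarrow> (\<exists>b. b * x = 1 \<and> x * b = 1)"

lemma inv_unique: fixes x b c :: "'a::ring_1" assumes "b * x = 1" "x * c = 1" shows "b = c"
proof -
  have "b = b * (x * c)" using assms by simp
  also have "\<dots> = (b * x) * c" by (simp add: mult.assoc)
  finally show ?thesis using assms by simp
qed

lemma isinv_mult: "isinv x \<Longrightarrow> isinv y \<Longrightarrow> isinv (x * y)"
proof -
  assume "isinv x" "isinv y"
  then obtain a b where a: "a * x = 1" "x * a = 1" and b: "b * y = 1" "y * b = 1" unfolding isinv_def by blast
  have "(b * a) * (x * y) = b * (a * x) * y" by (simp add: mult.assoc)
  moreover have "(x * y) * (b * a) = x * (y * b) * a" by (simp add: mult.assoc)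
  ultimately show ?thesis unfolding isinv_def using a b by auto
qed

lemma isinv_one: "isinv 1" unfolding isinv_def by auto

lemma not_isinv_zero: "\<not> isinv (0::'a::real_normed_algebra_1)"
  unfolding isinv_def by auto

lemma geom_sum_ring: fixes s :: "'a::ring_1"
  shows "(1 - s) * (\<Sum>i<n. s^i) = 1 - s^n" and "(\<Sum>i<n. s^i) * (1 - s) = 1 - s^n"
proof -
  show "(1 - s) * (\<Sum>i<n. s^i) = 1 - s^n"
  proof (induction n)
    case (Suc n)
    have "(1 - s) * (\<Sum>i<Suc n. s^i) = (1 - s) * (\<Sum>i<n. s^i) + (1 - s) * s^n"
      by (simp add: distrib_left)
    also have "\<dots> = 1 - s ^ Suc n" using Suc by (simp add: algebra_simps)
    finally show ?case .
  qed simp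
  show "(\<Sum>i<n. s^i) * (1 - s) = 1 - s^n"
  proof (induction n)
    case (Suc n)
    have "(\<Sum>i<Suc n. s^i) * (1 - s) = (\<Sum>i<n. s^i) * (1 - s) + s^n * (1 - s)"
      by (simp add: distrib_right)
    also have "\<dots> = 1 - s ^ Suc n" using Suc by (simp add: algebra_simps) (metis power_Suc power_Suc2)
    finally show ?case .
  qed simp
qed

lemma neumann:
  fixes y :: "'a::{real_normed_algebra_1,banach}"
  assumes "norm y < 1"
  shows "\<exists>b. b * (1 - y) = 1 \<and> (1 - y) * b = 1 \<and> norm b \<le> 1 / (1 - norm y)
           \<and> norm (b - 1) \<le> norm y / (1 - norm y)"
proof -
  have sn: "summable (\<lambda>n. norm y ^ n)" using assms by (simp add: summable_geometric)
  have sy: "summable (\<lambda>n. norm (y ^ n))"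
    by (rule summable_comparison_test[OF _ sn]) (auto intro: norm_power_ineq)
  hence sy': "summable (\<lambda>n. y ^ n)" by (rule summable_norm_cancel)
  define b where "b = (\<Sum>n. y ^ n)"
  have sums: "(\<lambda>N. \<Sum>i<N. y ^ i) \<longlonglongrightarrow> b" using sy' unfolding b_def by (simp add: summable_LIMSEQ)
  have y0: "(\<lambda>N. y ^ N) \<longlonglongrightarrow> 0"
  proof -
    have "(\<lambda>N. norm y ^ N) \<longlonglongrightarrow> 0" using assms by (simp add: LIMSEQ_power_zero)
    thus ?thesis
      by (rule Lim_null_comparison[rotated]) (auto intro: always_eventually norm_power_ineq)
  qed
  have l1: "(\<lambda>N. (1 - y) * (\<Sum>i<N. y ^ i)) \<longlonglongrightarrow> (1 - y) * b"
    by (intro tendsto_intros sums)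
  have l2: "(\<lambda>N. (\<Sum>i<N. y ^ i) * (1 - y)) \<longlonglongrightarrow> b * (1 - y)"
    by (intro tendsto_intros sums)
  have l3: "(\<lambda>N. 1 - y ^ N) \<longlonglongrightarrow> 1" using tendsto_diff[OF tendsto_const y0, of 1] by simp
  have e1: "(1 - y) * b = 1" using l1 l3 by (simp add: geom_sum_ring LIMSEQ_unique)
  have e2: "b * (1 - y) = 1" using l2 l3 by (simp add: geom_sum_ring LIMSEQ_unique)
  have nb: "norm b \<le> 1 / (1 - norm y)"
  proof -
    have "norm b \<le> (\<Sum>n. norm (y ^ n))" unfolding b_def by (rule summable_norm[OF sy])
    also have "\<dots> \<le> (\<Sum>n. norm y ^ n)"
      by (rule suminf_le[OF _ sy sn]) (simp add: norm_power_ineq)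
    also have "\<dots> = 1 / (1 - norm y)" using assms by (simp add: suminf_geometric)
    finally show ?thesis .
  qed
  have "b - 1 = b * y" using e2 by (simp add: algebra_simps)
  hence "norm (b - 1) \<le> norm b * norm y" by (simp add: norm_mult_ineq)
  also have "\<dots> \<le> 1 / (1 - norm y) * norm y" by (rule mult_right_mono[OF nb norm_ge_zero])
  finally have "norm (b - 1) \<le> norm y / (1 - norm y)" by simp
  thus ?thesis using e1 e2 nb by blast
qed

lemma perturb_inv:
  fixes x z b :: "'a::{real_normed_algebra_1,banach}"
  assumes "b * x = 1" "x * b = 1" "norm b * norm (z - x) < 1"
  shows "\<exists>c. c * z = 1 \<and> z * c = 1 \<and>
     norm (c - b) \<le> norm b * (norm b * norm (z - x)) / (1 - norm b * norm (z - x))"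
proof -
  define w where "w = b * (x - z)"
  have nw: "norm w \<le> norm b * norm (z - x)"
    unfolding w_def using norm_mult_ineq[of b "x - z"] by (simp add: norm_minus_commute)
  hence nw1: "norm w < 1" using assms(3) by simp
  obtain d where d: "d * (1 - w) = 1" "(1 - w) * d = 1" "norm (d - 1) \<le> norm w / (1 - norm w)"
    using neumann[OF nw1] by blast
  have zx: "z = x * (1 - w)" unfolding w_def using assms(2) by (simp add: algebra_simps mult.assoc[symmetric])
  have c1: "(d * b) * z = 1" unfolding zx
    by (metis assms(1) d(1) mult.assoc mult_1_left)
  have c2: "z * (d * b) = 1"
  proof -
    have "z * (d * b) = x * ((1 - w) * d) * b" unfolding zx by (simp add: mult.assoc)
    thus ?thesis using d(2) assms(2) by simp
  qed
  have "d * b - b = (d - 1) * b" by (simp add: algebra_simps)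
  hence "norm (d * b - b) \<le> norm (d - 1) * norm b" by (simp add: norm_mult_ineq)
  also have "\<dots> \<le> norm w / (1 - norm w) * norm b" by (rule mult_right_mono[OF d(3) norm_ge_zero])
  also have "\<dots> \<le> (norm b * norm (z - x)) / (1 - norm b * norm (z - x)) * norm b"
  proof (rule mult_right_mono[OF _ norm_ge_zero])
    show "norm w / (1 - norm w) \<le> norm b * norm (z - x) / (1 - norm b * norm (z - x))"
      using nw nw1 assms(3) by (intro frac_le) auto
  qed
  finally show ?thesis using c1 c2 by (auto simp: mult.commute)
qed

context cstar begin

definition ainv :: "'a \<Rightarrow> 'a" where "ainv x = (SOME b. b * x = 1 \<and> x * b = 1)"

lemma ainv: "isinv x \<Longrightarrow> ainv x * x = 1 \<and> x * ainv x = 1"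
  unfolding isinv_def ainv_def by (rule someI_ex)

lemma ainv_eq: "b * x = 1 \<Longrightarrow> x * c = 1 \<Longrightarrow> ainv x = b"
proof -
  assume a: "b * x = 1" "x * c = 1"
  hence "b = c" by (rule inv_unique)
  hence "isinv x" using a unfolding isinv_def by blast
  thus ?thesis using ainv a inv_unique by metis
qed

lemma isinv_sc1: "c \<noteq> 0 \<Longrightarrow> isinv (sc c 1)"
  unfolding isinv_def by (rule exI[of _ "sc (1/c) 1"]) (simp add: sc_11)

lemma norm_sc1: "norm (sc c 1) = cmod c" by (simp add: norm_sc)

lemma spec_iff: "c \<in> cspectrum sc x \<longleftrightarrow> \<not> isinv (x - sc c 1)"
  unfolding cspectrum_def isinv_def by simp

lemma spec_bound: assumes "c \<in> cspectrum sc x" shows "cmod c \<le> norm x"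
proof (rule ccontr)
  assume "\<not> cmod c \<le> norm x"
  hence c0: "c \<noteq> 0" and lt: "norm x < cmod c" by auto
  have "norm (sc (1/c) x) < 1" using lt c0 by (simp add: norm_sc norm_divide field_simps)
  then obtain b where "b * (1 - sc (1/c) x) = 1" "(1 - sc (1/c) x) * b = 1" using neumann by blast
  hence i1: "isinv (1 - sc (1/c) x)" unfolding isinv_def by blast
  have "x - sc c 1 = sc (-c) 1 * (1 - sc (1/c) x)"
    using c0 by (simp add: algebra_simps sc_1l sc_assoc sc_minusl)
  hence "isinv (x - sc c 1)" using isinv_mult[OF isinv_sc1 i1, of "-c"] c0 by simp
  thus False using assms spec_iff by blast
qed

lemma spec_closed: "closed (cspectrum sc x)"
proof -
  have "open (- cspectrum sc x)"
  proof (rule openI)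
    fix c assume "c \<in> - cspectrum sc x"
    hence "isinv (x - sc c 1)" using spec_iff by blast
    then obtain b where b: "b * (x - sc c 1) = 1" "(x - sc c 1) * b = 1" unfolding isinv_def by blast
    define e where "e = 1 / (norm b + 1)"
    have e: "e > 0" unfolding e_def by (simp add: add_nonneg_pos)
    have "ball c e \<subseteq> - cspectrum sc x"
    proof
      fix d assume "d \<in> ball c e"
      hence "cmod (c - d) < e" by (simp add: dist_norm)
      have eq: "(x - sc d 1) - (x - sc c 1) = sc (c - d) 1" by (simp add: sc_diffl)
      have "norm b * norm ((x - sc d 1) - (x - sc c 1)) < 1"
      proof -
        have "norm b * cmod (c - d) \<le> norm b * e"
          using \<open>cmod (c - d) < e\<close> by (intro mult_left_mono) auto
        also have "\<dots> < 1"
        proof -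
          have p: "0 < norm b + 1" by (simp add: add_nonneg_pos)
          have "norm b / (norm b + 1) < 1" using p by (simp add: divide_less_eq_1_pos)
          thus ?thesis unfolding e_def by simp
        qed
        finally show ?thesis unfolding eq norm_sc1 .
      qed
      then obtain c' where "c' * (x - sc d 1) = 1" "(x - sc d 1) * c' = 1"
        using perturb_inv[OF b] by blast
      thus "d \<in> - cspectrum sc x" using spec_iff isinv_def by blast
    qed
    thus "\<exists>e>0. ball c e \<subseteq> - cspectrum sc x" using e by blast
  qed
  thus ?thesis by (simp add: closed_open)
qed

lemma spec_compact: "compact (cspectrum sc x)"
proof -
  have "bounded (cspectrum sc x)"
    unfolding bounded_iff using spec_bound by blast
  thus ?thesis using spec_closed by (simp add: compact_eq_bounded_closed)
qed

end

lemma root_unity_sum: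
  assumes "0 < j" "j < n"
  shows "(\<Sum>k<n. (exp (2 * of_real pi * \<i> / of_nat n) ^ j) ^ k) = (0::complex)"
proof -
  define w where "w = exp (2 * of_real pi * \<i> / of_nat n) ^ j"
  have n1: "1 \<le> n" using assms by simp
  have w: "w = exp (2 * of_real pi * \<i> * of_nat j / of_nat n)"
    unfolding w_def by (simp add: exp_of_nat_mult[symmetric] mult.commute mult.left_commute)
  have "w \<noteq> 1" unfolding w using complex_root_unity_eq_1[OF n1, of j] assms
    by (simp add: nat_dvd_not_less)
  moreover have "w ^ n = 1" unfolding w using complex_root_unity[of n j] assms by simp
  ultimately show ?thesis unfolding w_def[symmetric] by (simp add: geometric_sum)
qed

lemma norm_omega_pow: "cmod (exp (2 * of_real pi * \<i> / of_nat n) ^ k) = 1"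
proof -
  have "cmod (exp (2 * of_real pi * \<i> / of_nat n)) = 1"
    by (simp add: norm_exp_eq_Re)
  thus ?thesis by (simp add: norm_power)
qed

lemma omega_pow_n: "n \<ge> 1 \<Longrightarrow> (exp (2 * of_real pi * \<i> / of_nat n) ^ k) ^ n = 1"
proof -
  assume n: "n \<ge> 1"
  have "exp (2 * of_real pi * \<i> / of_nat n) ^ n = 1"
    using complex_root_unity[of n 1] n by simp
  thus ?thesis by (metis power_mult mult.commute power_one)
qed

context cstar begin

lemma sc_mult_sc: "sc c x * sc d y = sc (c * d) (x * y)"
  by (metis sc_assoc sc_multl sc_multr)

lemma sc_power: "(sc c x) ^ n = sc (c ^ n) (x ^ n)"
  by (induction n) (auto simp: sc_mult_sc)

lemma lemA:
  fixes z c :: 'a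
  assumes "(1 - z) * c = 1" "norm (c - 1) \<le> 1/2"
  shows "norm z \<le> 3"
proof -
  have "norm (1 - c) < 1" using assms(2) by (simp add: norm_minus_commute)
  from neumann[OF this] obtain d where d: "d * (1 - (1 - c)) = 1" "(1 - (1 - c)) * d = 1" "norm d \<le> 1 / (1 - norm (1 - c))"
    by blast
  have "norm d \<le> 2"
  proof -
    have "1 - norm (1 - c) \<ge> 1/2" using assms(2) by (simp add: norm_minus_commute)
    hence "1 / (1 - norm (1 - c)) \<le> 2" by (simp add: divide_le_eq)
    thus ?thesis using d(3) by simp
  qed
  have "1 - z = (1 - z) * c * d" using d(2) by (simp add: mult.assoc)
  hence "1 - z = d" using assms(1) by simp
  hence "norm (1 - z) \<le> 2" using \<open>norm d \<le> 2\<close> by simp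
  moreover have "norm z \<le> norm (1::'a) + norm (1 - z)"
    using norm_triangle_ineq4[of 1 "1 - z"] by simp
  ultimately show ?thesis by simp
qed

lemma roots_id:
  fixes g :: "complex \<Rightarrow> 'a"
  assumes n: "n \<ge> 1" and g: "\<And>\<mu>. cmod \<mu> = cmod \<mu>0 \<Longrightarrow> (1 - sc \<mu> x) * g \<mu> = 1"
  shows "(1 - sc (\<mu>0 ^ n) (x ^ n)) * sc (1 / of_nat n)
           (\<Sum>k<n. g (exp (2 * of_real pi * \<i> / of_nat n) ^ k * \<mu>0)) = 1"
proof -
  define w where "w = exp (2 * of_real pi * \<i> / of_nat n)"
  have each: "(1 - sc (\<mu>0 ^ n) (x ^ n)) * g (w ^ k * \<mu>0) = (\<Sum>j<n. sc ((w^k * \<mu>0) ^ j) (x ^ j))" for k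
  proof -
    define s where "s = sc (w^k * \<mu>0) x"
    have sn: "s ^ n = sc (\<mu>0 ^ n) (x ^ n)" unfolding s_def sc_power
      using omega_pow_n[OF n, of k] by (simp add: power_mult_distrib w_def)
    have gg: "(1 - s) * g (w ^ k * \<mu>0) = 1" unfolding s_def
      by (rule g) (simp add: norm_mult w_def norm_omega_pow)
    have "(1 - s ^ n) * g (w ^ k * \<mu>0) = (\<Sum>j<n. s ^ j) * ((1 - s) * g (w ^ k * \<mu>0))"
      by (simp add: geom_sum_ring(2)[symmetric] mult.assoc)
    also have "\<dots> = (\<Sum>j<n. s ^ j)" using gg by simp
    finally show ?thesis unfolding sn[symmetric] by (simp add: s_def sc_power)
  qed
  have "(1 - sc (\<mu>0 ^ n) (x ^ n)) * (\<Sum>k<n. g (w ^ k * \<mu>0))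
        = (\<Sum>k<n. \<Sum>j<n. sc ((w^k * \<mu>0) ^ j) (x ^ j))"
    by (simp add: sum_distrib_left each)
  also have "\<dots> = (\<Sum>j<n. \<Sum>k<n. sc ((w^k * \<mu>0) ^ j) (x ^ j))" by (rule sum.swap)
  also have "\<dots> = (\<Sum>j<n. sc (\<Sum>k<n. (w^k * \<mu>0) ^ j) (x ^ j))" by (simp add: sc_suml)
  also have "\<dots> = (\<Sum>j<n. if j = 0 then sc (of_nat n) 1 else 0)"
  proof (rule sum.cong[OF refl])
    fix j assume j: "j \<in> {..<n}"
    show "sc (\<Sum>k<n. (w^k * \<mu>0) ^ j) (x ^ j) = (if j = 0 then sc (of_nat n) 1 else 0)"
    proof (cases "j = 0")
      case False
      have "(\<Sum>k<n. (w^k * \<mu>0) ^ j) = \<mu>0 ^ j * (\<Sum>k<n. (w ^ j) ^ k)"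
        by (simp add: power_mult_distrib sum_distrib_left mult.commute power_mult[symmetric])
      also have "\<dots> = 0" using root_unity_sum[of j n] False j unfolding w_def by simp
      finally show ?thesis using False by simp
    qed simp
  qed
  also have "\<dots> = sc (of_nat n) 1" using n by (simp add: sum.delta)
  finally have *: "(1 - sc (\<mu>0 ^ n) (x ^ n)) * (\<Sum>k<n. g (w ^ k * \<mu>0)) = sc (of_nat n) 1" .
  have "(1 - sc (\<mu>0 ^ n) (x ^ n)) * sc (1 / of_nat n) (\<Sum>k<n. g (w ^ k * \<mu>0))
     = sc (1 / of_nat n) ((1 - sc (\<mu>0 ^ n) (x ^ n)) * (\<Sum>k<n. g (w ^ k * \<mu>0)))"
    by (simp add: sc_multr)
  also have "\<dots> = 1" unfolding * using n by (simp add: sc_assoc)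
  finally show ?thesis unfolding w_def .
qed

end

context cstar begin

lemma res_cont:
  assumes inv: "\<And>\<mu>. cmod \<mu> \<le> R \<Longrightarrow> isinv (1 - sc \<mu> x)"
  shows "continuous_on (cball 0 R) (\<lambda>\<mu>. ainv (1 - sc \<mu> x))"
proof (rule continuous_on_iff[THEN iffD2], intro ballI allI impI)
  fix \<mu>0 :: complex and e :: real
  assume m0: "\<mu>0 \<in> cball 0 R" and e: "e > 0"
  define b where "b = ainv (1 - sc \<mu>0 x)"
  have b: "b * (1 - sc \<mu>0 x) = 1" "(1 - sc \<mu>0 x) * b = 1"
    using ainv[OF inv] m0 unfolding b_def by auto
  define M where "M = norm b * norm x + 1"
  have M: "M > 0" unfolding M_def by (simp add: add_nonneg_pos)
  define d where "d = min (1 / (2 * M)) (e / (4 * (norm b + 1) * M))"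
  have d: "d > 0" unfolding d_def using M e by (simp add: add_nonneg_pos)
  have "\<forall>\<mu>\<in>cball 0 R. dist \<mu> \<mu>0 < d \<longrightarrow> dist (ainv (1 - sc \<mu> x)) b < e"
  proof (intro ballI impI)
    fix \<mu> assume m: "\<mu> \<in> cball 0 R" and dm: "dist \<mu> \<mu>0 < d"
    define t where "t = norm b * norm ((1 - sc \<mu> x) - (1 - sc \<mu>0 x))"
    have eq: "(1 - sc \<mu> x) - (1 - sc \<mu>0 x) = sc (\<mu>0 - \<mu>) x" by (simp add: sc_diffl)
    have t: "t = norm b * norm x * cmod (\<mu> - \<mu>0)"
      unfolding t_def eq norm_sc by (simp add: norm_minus_commute)
    have t0: "t \<ge> 0" unfolding t_def by simp
    have tM: "t \<le> M * d"
    proof -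
      have "t \<le> M * cmod (\<mu> - \<mu>0)" unfolding t M_def
        by (intro mult_right_mono) auto
      also have "\<dots> \<le> M * d" using dm M by (intro mult_left_mono) (auto simp: dist_norm)
      finally show ?thesis .
    qed
    have t2: "t \<le> 1/2"
    proof -
      have "M * d \<le> M * (1 / (2 * M))" unfolding d_def using M by (intro mult_left_mono) auto
      thus ?thesis using tM M by simp
    qed
    obtain c where c: "c * (1 - sc \<mu> x) = 1" "(1 - sc \<mu> x) * c = 1"
      "norm (c - b) \<le> norm b * t / (1 - t)"
      using perturb_inv[OF b, of "1 - sc \<mu> x"] t2 unfolding t_def by auto
    have "ainv (1 - sc \<mu> x) = c" using ainv_eq c by blast
    moreover have "norm b * t / (1 - t) < e"
    proof -
      have "norm b * t / (1 - t) \<le> 2 * (norm b * t)"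
      proof -
        have "1 \<le> 2 * (1 - t)" using t2 by simp
        hence "norm b * t * 1 \<le> norm b * t * (2 * (1 - t))" using t0 by (intro mult_left_mono) auto
        moreover have "1 - t > 0" using t2 by simp
        ultimately show ?thesis by (simp add: divide_le_eq algebra_simps)
      qed
      also have "\<dots> \<le> 2 * (norm b * (M * d))" using tM by (intro mult_left_mono) auto
      also have "\<dots> \<le> 2 * (norm b * (M * (e / (4 * (norm b + 1) * M))))"
        unfolding d_def using M by (intro mult_left_mono) auto
      also have "\<dots> = e * (norm b / (2 * (norm b + 1)))"
      proof -
        have nbp: "norm b + 1 \<noteq> 0" using add_nonneg_pos[of "norm b" 1] by simp
        have "M \<noteq> 0" using M by simp
        thus ?thesis using nbp by (simp add: divide_simps)
      qed
      also have "\<dots> < e * 1"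
        using e by (intro mult_strict_left_mono) (auto simp: add_nonneg_pos)
      finally show ?thesis by simp
    qed
    ultimately show "dist (ainv (1 - sc \<mu> x)) b < e" using c(3) by (simp add: dist_norm)
  qed
  thus "\<exists>d>0. \<forall>\<mu>\<in>cball 0 R. dist \<mu> \<mu>0 < d \<longrightarrow> dist (ainv (1 - sc \<mu> x)) (ainv (1 - sc \<mu>0 x)) < e"
    using d unfolding b_def by blast
qed

lemma SR:
  assumes R: "R > 0" and inv: "\<And>\<mu>. cmod \<mu> \<le> R \<Longrightarrow> isinv (1 - sc \<mu> x)"
  shows "\<exists>N. \<forall>n\<ge>N. R ^ n * norm (x ^ n) \<le> 3"
proof -
  define g where "g \<mu> = ainv (1 - sc \<mu> x)" for \<mu>
  have g: "cmod \<mu> \<le> R \<Longrightarrow> g \<mu> * (1 - sc \<mu> x) = 1 \<and> (1 - sc \<mu> x) * g \<mu> = 1" for \<mu>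
    unfolding g_def using ainv[OF inv] by blast
  have "compact (g ` cball 0 R)"
    using res_cont[OF inv] unfolding g_def[abs_def] by (intro compact_continuous_image) auto
  hence "bounded (g ` cball 0 R)" by (rule compact_imp_bounded)
  then obtain K where K: "K > 0" "\<And>\<mu>. \<mu> \<in> cball 0 R \<Longrightarrow> norm (g \<mu>) \<le> K"
    unfolding bounded_pos by blast
  define L where "L = K * K * norm x + 1"
  have L: "L > 0" unfolding L_def using K by (simp add: add_nonneg_pos)
  have lip: "norm (g \<mu> - g \<mu>') \<le> L * cmod (\<mu> - \<mu>')" if "cmod \<mu> \<le> R" "cmod \<mu>' \<le> R" for \<mu> \<mu>'
  proof -
    have eq: "g \<mu> - g \<mu>' = g \<mu> * sc (\<mu> - \<mu>') x * g \<mu>'"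
    proof -
      have "g \<mu> * ((1 - sc \<mu>' x) - (1 - sc \<mu> x)) * g \<mu>'
          = g \<mu> * ((1 - sc \<mu>' x) * g \<mu>') - (g \<mu> * (1 - sc \<mu> x)) * g \<mu>'"
        by (simp add: algebra_simps)
      also have "\<dots> = g \<mu> - g \<mu>'" using g that by simp
      finally show ?thesis by (simp add: sc_diffl)
    qed
    have "norm (g \<mu> - g \<mu>') \<le> norm (g \<mu>) * (cmod (\<mu> - \<mu>') * norm x) * norm (g \<mu>')"
    proof -
      have "norm (g \<mu> * sc (\<mu> - \<mu>') x * g \<mu>') \<le> norm (g \<mu> * sc (\<mu> - \<mu>') x) * norm (g \<mu>')"
        by (rule norm_mult_ineq)
      also have "\<dots> \<le> norm (g \<mu>) * norm (sc (\<mu> - \<mu>') x) * norm (g \<mu>')"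
        by (intro mult_right_mono norm_mult_ineq) auto
      finally show ?thesis unfolding eq norm_sc .
    qed
    also have "\<dots> \<le> K * (cmod (\<mu> - \<mu>') * norm x) * K"
      using K that by (intro mult_mono) auto
    also have "\<dots> \<le> L * cmod (\<mu> - \<mu>')" unfolding L_def by (simp add: algebra_simps)
    finally show ?thesis .
  qed
  define w where "w n = exp (2 * of_real pi * \<i> / of_nat n)" for n :: nat
  define c where "c n r = sc (1 / of_nat n) (\<Sum>k<n. g (w n ^ k * complex_of_real r))" for n r
  have cid: "(1 - sc (complex_of_real (r ^ n)) (x ^ n)) * c n r = 1" if "n \<ge> 1" "0 \<le> r" "r \<le> R" for n r
    using roots_id[OF that(1), of "complex_of_real r" x g] g that unfolding c_def w_def
    by (simp add: of_real_power)
  have cdiff: "norm (c n r - c n r') \<le> L * \<bar>r - r'\<bar>"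
    if "n \<ge> 1" "0 \<le> r" "r \<le> R" "0 \<le> r'" "r' \<le> R" for n r r'
  proof -
    have "c n r - c n r' = sc (1 / of_nat n) (\<Sum>k<n. g (w n ^ k * r) - g (w n ^ k * r'))"
      unfolding c_def by (simp add: sc_diffr sum_subtractf)
    hence "norm (c n r - c n r') \<le> (1 / n) * (\<Sum>k<n. norm (g (w n ^ k * r) - g (w n ^ k * r')))"
      by (simp add: norm_sc norm_divide divide_right_mono norm_sum)
    also have "\<dots> \<le> (1 / n) * (\<Sum>k<n. L * \<bar>r - r'\<bar>)"
    proof (intro mult_left_mono sum_mono)
      fix k
      have nw: "cmod (w n ^ k) = 1" unfolding w_def by (rule norm_omega_pow)
      have "norm (g (w n ^ k * r) - g (w n ^ k * r')) \<le> L * cmod (w n ^ k * r - w n ^ k * r')"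
        using that nw by (intro lip) (auto simp: norm_mult)
      also have "\<dots> = L * \<bar>r - r'\<bar>"
        using nw by (simp add: right_diff_distrib[symmetric] norm_mult of_real_diff[symmetric] del: of_real_diff)
      finally show "norm (g (w n ^ k * r) - g (w n ^ k * r')) \<le> L * \<bar>r - r'\<bar>" .
    qed simp
    also have "\<dots> = L * \<bar>r - r'\<bar>" using that by simp
    finally show ?thesis .
  qed
  define \<delta> where "\<delta> = 1 / (4 * L)"
  have \<delta>: "\<delta> > 0" unfolding \<delta>_def using L by simp
  have lemC: "\<exists>N. \<forall>n\<ge>N. r' ^ n * norm (x ^ n) \<le> 3"
    if r'': "0 \<le> r''" "r'' \<le> R" "(\<lambda>n. r'' ^ n * norm (x ^ n)) \<longlonglongrightarrow> 0"
      and r': "0 \<le> r'" "r' \<le> R" "\<bar>r' - r''\<bar> \<le> \<delta>" for r' r''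
  proof -
    obtain N where N: "\<forall>n\<ge>N. r'' ^ n * norm (x ^ n) \<le> 1/8"
      using r''(3)[THEN order_tendstoD(2), of "1/8"] unfolding eventually_sequentially
      by (auto intro: less_imp_le)
    have "r' ^ n * norm (x ^ n) \<le> 3" if n: "n \<ge> max N 1" for n
    proof -
      define z where "z = sc (complex_of_real (r'' ^ n)) (x ^ n)"
      have nz: "norm z \<le> 1/8" unfolding z_def norm_sc using N n r'' by (auto simp: norm_power)
      hence "norm z < 1" by simp
      from neumann[OF this] obtain b where b: "b * (1 - z) = 1" "(1 - z) * b = 1"
        "norm (b - 1) \<le> norm z / (1 - norm z)" by blast
      have "b = c n r''" using inv_unique[OF b(1)] cid[of n r''] n r'' unfolding z_def by auto
      have "norm z / (1 - norm z) \<le> 1/4"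
        using nz by (simp add: divide_le_eq) 
      hence c1: "norm (c n r'' - 1) \<le> 1/4" using b(3) \<open>b = c n r''\<close> by (metis order_trans)
      have "norm (c n r' - c n r'') \<le> L * \<bar>r' - r''\<bar>" using cdiff n r' r'' by auto
      also have "\<dots> \<le> L * \<delta>" using r' L by (intro mult_left_mono) auto
      also have "\<dots> = 1/4" unfolding \<delta>_def using L by simp
      finally have "norm (c n r' - 1) \<le> 1/2"
        using c1 norm_triangle_ineq[of "c n r' - c n r''" "c n r'' - 1"] by simp
      hence "norm (sc (complex_of_real (r' ^ n)) (x ^ n)) \<le> 3"
        using lemA cid[of n r'] n r' by auto
      thus ?thesis using r' by (simp add: norm_sc norm_power)
    qed
    thus ?thesis by blast
  qed
  have lemD: "(\<lambda>n. r ^ n * norm (x ^ n)) \<longlonglongrightarrow> 0"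
    if ex: "\<exists>N. \<forall>n\<ge>N. r' ^ n * norm (x ^ n) \<le> 3" and rr: "0 \<le> r" "r < r'" for r r'
  proof -
    obtain N where N: "\<forall>n\<ge>N. r' ^ n * norm (x ^ n) \<le> 3" using ex by blast
    have q: "(\<lambda>n. 3 * (r / r') ^ n) \<longlonglongrightarrow> 0"
      using rr by (intro tendsto_mult_right_zero LIMSEQ_power_zero) auto
    show ?thesis
    proof (rule Lim_null_comparison[OF _ q])
      show "\<forall>\<^sub>F n in sequentially. norm (r ^ n * norm (x ^ n)) \<le> 3 * (r / r') ^ n"
        unfolding eventually_sequentially
      proof (intro exI allI impI)
        fix n assume "n \<ge> N"
        hence "r' ^ n * norm (x ^ n) \<le> 3" using N by blast
        hence A: "(r / r') ^ n * (r' ^ n * norm (x ^ n)) \<le> (r / r') ^ n * 3"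
          using rr by (intro mult_left_mono) auto
        have eq: "(r / r') ^ n * r' ^ n = r ^ n" using rr by (simp add: power_divide)
        have B: "r ^ n * norm (x ^ n) = (r / r') ^ n * (r' ^ n * norm (x ^ n))"
          by (metis eq mult.assoc)
        have "norm (r ^ n * norm (x ^ n)) = r ^ n * norm (x ^ n)" using rr by simp
        also have "\<dots> \<le> 3 * (r / r') ^ n" using A B by (simp only: mult.commute)
        finally show "norm (r ^ n * norm (x ^ n)) \<le> 3 * (r / r') ^ n" .
      qed
    qed
  qed
  define Q where "Q a \<longleftrightarrow> (\<forall>r. 0 \<le> r \<and> r < a \<longrightarrow> (\<lambda>n. r ^ n * norm (x ^ n)) \<longlonglongrightarrow> 0)" for a
  define a0 where "a0 = min R (1 / (norm x + 1))"
  have a0: "a0 > 0" unfolding a0_def using R by (simp add: add_nonneg_pos)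
  have Q0: "Q a0" unfolding Q_def
  proof (intro allI impI)
    fix r assume r: "0 \<le> r \<and> r < a0"
    have "r * (norm x + 1) < 1"
      using r unfolding a0_def by (simp add: less_divide_eq add_nonneg_pos)
    hence rx: "r * norm x < 1" using r by (smt (verit) mult_left_mono)
    have "(\<lambda>n. (r * norm x) ^ n) \<longlonglongrightarrow> 0"
      using rx r by (intro LIMSEQ_power_zero) auto
    thus "(\<lambda>n. r ^ n * norm (x ^ n)) \<longlonglongrightarrow> 0"
    proof (rule Lim_null_comparison[rotated])
      show "\<forall>\<^sub>F n in sequentially. norm (r ^ n * norm (x ^ n)) \<le> (r * norm x) ^ n"
        using r by (intro always_eventually allI) (simp add: power_mult_distrib mult_left_mono norm_power_ineq)
    qed
  qed
  have Qmono: "Q a \<Longrightarrow> b \<le> a \<Longrightarrow> Q b" for a b unfolding Q_def by auto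
  have Qstep: "Q (min R (a + \<delta>/2))" if "Q a" "0 < a" "a \<le> R" for a
  proof -
    define m where "m = min R (a + \<delta>/2)"
    define r'' where "r'' = max 0 (a - \<delta>/2)"
    have r''a: "r'' < a" unfolding r''_def using that \<delta> by simp
    have "(\<lambda>n. r'' ^ n * norm (x ^ n)) \<longlonglongrightarrow> 0" using that(1) r''a unfolding Q_def r''_def by auto
    hence "\<exists>N. \<forall>n\<ge>N. m ^ n * norm (x ^ n) \<le> 3"
      using that R \<delta> by (intro lemC[of r'']) (auto simp: m_def r''_def)
    thus ?thesis unfolding Q_def m_def[symmetric] using lemD by blast
  qed
  have Qk: "Q (min R (a0 + real k * \<delta>/2))" for k
  proof (induction k)
    case 0 show ?case using Q0 Qmono by fastforce
  next
    case (Suc k)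
    have p: "0 < a0 + real k * \<delta>/2" using a0 \<delta> by (simp add: add_pos_nonneg)
    have "Q (min R (min R (a0 + real k * \<delta>/2) + \<delta>/2))"
      using Qstep[OF Suc] p R by auto
    moreover have "min R (a0 + real (Suc k) * \<delta>/2) \<le> min R (min R (a0 + real k * \<delta>/2) + \<delta>/2)"
      using \<delta> by (simp add: min_def distrib_right add_divide_distrib)
    ultimately show ?case by (rule Qmono)
  qed
  obtain k where k: "R \<le> a0 + real k * \<delta>/2"
  proof -
    obtain k where "R / (\<delta>/2) \<le> real k" using real_arch_simple by blast
    hence "R \<le> real k * \<delta>/2" using \<delta> by (simp add: divide_le_eq mult.commute)
    thus ?thesis using that a0 by (meson add_increasing less_imp_le order_trans order_refl)
  qed
  have QR: "Q R" using Qk[of k] k by (simp add: min_absorb1)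
  have "(\<lambda>n. (max 0 (R - \<delta>/2)) ^ n * norm (x ^ n)) \<longlonglongrightarrow> 0"
    using QR R \<delta> unfolding Q_def by auto
  thus ?thesis using R \<delta> by (intro lemC[of "max 0 (R - \<delta>/2)"]) auto
qed

end

context cstar begin

lemma open_inv_set: "open {\<mu>. isinv (1 - sc \<mu> x)}"
proof (rule openI)
  fix \<mu>0 assume "\<mu>0 \<in> {\<mu>. isinv (1 - sc \<mu> x)}"
  then obtain b where b: "b * (1 - sc \<mu>0 x) = 1" "(1 - sc \<mu>0 x) * b = 1" unfolding isinv_def by blast
  define e where "e = 1 / ((norm b + 1) * (norm x + 1))"
  have p1: "norm b + 1 > 0" "norm x + 1 > 0" by (auto simp: add_nonneg_pos)
  hence e: "e > 0" unfolding e_def by simp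
  have "ball \<mu>0 e \<subseteq> {\<mu>. isinv (1 - sc \<mu> x)}"
  proof
    fix \<mu> assume "\<mu> \<in> ball \<mu>0 e"
    hence d: "cmod (\<mu> - \<mu>0) < e" by (simp add: dist_norm norm_minus_commute)
    have eq: "(1 - sc \<mu> x) - (1 - sc \<mu>0 x) = sc (\<mu>0 - \<mu>) x" by (simp add: sc_diffl)
    have "norm b * norm ((1 - sc \<mu> x) - (1 - sc \<mu>0 x)) < 1"
    proof -
      have "norm b * (cmod (\<mu> - \<mu>0) * norm x) \<le> (norm b + 1) * (cmod (\<mu> - \<mu>0) * (norm x + 1))"
        by (intro mult_mono) auto
      also have "\<dots> < (norm b + 1) * (e * (norm x + 1))"
        using d p1 by (intro mult_strict_left_mono mult_strict_right_mono) auto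
      also have "\<dots> = 1" unfolding e_def using p1 by simp
      finally show ?thesis unfolding eq norm_sc by (simp add: norm_minus_commute)
    qed
    then obtain c where "c * (1 - sc \<mu> x) = 1" "(1 - sc \<mu> x) * c = 1"
      using perturb_inv[OF b] by blast
    thus "\<mu> \<in> {\<mu>. isinv (1 - sc \<mu> x)}" unfolding isinv_def by blast
  qed
  thus "\<exists>e>0. ball \<mu>0 e \<subseteq> {\<mu>. isinv (1 - sc \<mu> x)}" using e by blast
qed

lemma ET:
  assumes "sa y"
  shows "\<exists>l\<in>cspectrum sc y. cmod l = norm y"
proof (cases "y = 0")
  case True
  have "0 \<in> cspectrum sc y" unfolding spec_iff True using not_isinv_zero by simp
  thus ?thesis using True by force
next
  case False
  define ny where "ny = norm y"
  have ny: "ny > 0" using False unfolding ny_def by simp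
  show ?thesis
  proof (rule ccontr)
    assume H: "\<not> ?thesis"
    have inv1: "isinv (1 - sc \<mu> y)" if "cmod \<mu> \<le> 1 / ny" for \<mu>
    proof (cases "\<mu> = 0")
      case True thus ?thesis by (simp add: isinv_one)
    next
      case m0: False
      show ?thesis
      proof (rule ccontr)
        assume ni: "\<not> isinv (1 - sc \<mu> y)"
        have "1 / \<mu> \<in> cspectrum sc y"
        proof (unfold spec_iff, rule notI)
          assume "isinv (y - sc (1 / \<mu>) 1)"
          moreover have "1 - sc \<mu> y = sc (-\<mu>) 1 * (y - sc (1 / \<mu>) 1)"
            using m0 by (simp add: right_diff_distrib sc_1l sc_11 sc_minusl sc_assoc)
          ultimately have "isinv (1 - sc \<mu> y)"
            using isinv_mult[OF isinv_sc1[of "-\<mu>"]] m0 by simp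
          thus False using ni by blast
        qed
        moreover have "cmod (1 / \<mu>) \<ge> ny"
          using that m0 ny by (simp add: norm_divide field_simps)
        ultimately show False using spec_bound H ny_def by fastforce
      qed
    qed
    have sub: "cball 0 (1 / ny) \<subseteq> {\<mu>. isinv (1 - sc \<mu> y)}" using inv1 by auto
    obtain \<epsilon> where \<epsilon>: "\<epsilon> > 0" "(\<Union>x\<in>cball 0 (1 / ny). ball x \<epsilon>) \<subseteq> {\<mu>. isinv (1 - sc \<mu> y)}"
      using compact_subset_open_imp_ball_epsilon_subset[OF compact_cball open_inv_set sub] by blast
    define R where "R = 1 / ny + \<epsilon> / 2"
    have R: "R > 0" unfolding R_def using ny \<epsilon>(1) by (simp add: add_pos_pos)
    have invR: "isinv (1 - sc \<mu> y)" if "cmod \<mu> \<le> R" for \<mu>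
    proof (cases "cmod \<mu> \<le> 1 / ny")
      case True thus ?thesis using inv1 by blast
    next
      case False
      define \<mu>' where "\<mu>' = complex_of_real (1 / ny / cmod \<mu>) * \<mu>"
      have m0: "cmod \<mu> > 0" using False ny by (smt (verit) divide_pos_pos)
      have "cmod \<mu>' = 1 / ny" unfolding \<mu>'_def norm_mult norm_of_real using m0 ny by simp
      moreover have "cmod (\<mu>' - \<mu>) < \<epsilon>"
      proof -
        have "\<mu>' - \<mu> = complex_of_real (1 / ny / cmod \<mu> - 1) * \<mu>" unfolding \<mu>'_def
          by (simp add: algebra_simps)
        hence "cmod (\<mu>' - \<mu>) = \<bar>1 / ny / cmod \<mu> - 1\<bar> * cmod \<mu>"
          by (simp only: norm_mult norm_of_real)
        also have "\<dots> = cmod \<mu> - 1 / ny"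
        proof -
          have "1 / ny < cmod \<mu>" using False by simp
          hence lt: "1 / ny / cmod \<mu> < 1" using m0 by (simp only: divide_less_eq_1_pos)
          hence "\<bar>1 / ny / cmod \<mu> - 1\<bar> * cmod \<mu> = (1 - 1 / ny / cmod \<mu>) * cmod \<mu>" by simp
          also have "\<dots> = cmod \<mu> - 1 / ny" using m0 by (simp add: algebra_simps)
          finally show ?thesis .
        qed
        also have "\<dots> < \<epsilon>" using that \<epsilon> unfolding R_def by simp
        finally show ?thesis .
      qed
      ultimately have "\<mu> \<in> (\<Union>x\<in>cball 0 (1 / ny). ball x \<epsilon>)" by (auto simp: dist_norm)
      thus ?thesis using \<epsilon>(2) by blast
    qed
    obtain N where N: "\<forall>n\<ge>N. R ^ n * norm (y ^ n) \<le> 3" using SR[OF R invR] by blast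
    have Rny: "R * ny > 1" unfolding R_def using ny \<epsilon> by (simp add: distrib_right)
    obtain n where n: "3 < (R * ny) ^ n" using real_arch_pow[OF Rny] by blast
    have "(R * ny) ^ n \<le> (R * ny) ^ (n + N)" using Rny by (intro power_increasing) auto
    also have "\<dots> = R ^ (n + N) * norm (y ^ (n + N))"
      using norm_sa_power[OF assms] unfolding ny_def by (simp add: power_mult_distrib)
    also have "\<dots> \<le> 3" using N by simp
    finally show False using n by simp
  qed
qed

lemma spec_real:
  assumes h: "sa h" and l: "l \<in> cspectrum sc h"
  shows "Im l = 0"
proof (rule ccontr)
  assume b0: "Im l \<noteq> 0"
  define a where "a = Re l"
  define b where "b = Im l"
  define u where "u = h - of_real a"
  have stu: "st u = u" using h unfolding u_def sa_def by (simp add: st_diff st_of_real)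
  define C where "C = (norm u)\<^sup>2"
  have key: "b\<^sup>2 + 2 * b * t \<le> C" for t
  proof -
    define s where "s = sc (\<i> * complex_of_real t) 1"
    define z where "z = u + s"
    have "z - sc (\<i> * complex_of_real (b + t)) 1 = h - sc l 1"
    proof -
      have "l = complex_of_real a + \<i> * complex_of_real b" unfolding a_def b_def by (simp add: complex_eq)
      hence "sc l 1 = of_real a + sc (\<i> * complex_of_real b) 1" by (simp add: sc_addl sc_of_real)
      moreover have "sc (\<i> * complex_of_real (b + t)) 1 = sc (\<i> * complex_of_real b) 1 + s"
        unfolding s_def by (simp add: distrib_left sc_addl)
      ultimately show ?thesis unfolding z_def u_def by (simp add: algebra_simps)
    qed
    hence "\<i> * complex_of_real (b + t) \<in> cspectrum sc z" using l unfolding spec_iff by simp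
    hence nb0: "cmod (\<i> * complex_of_real (b + t)) \<le> norm z" by (rule spec_bound)
    have nb: "\<bar>b + t\<bar> \<le> norm z" using nb0 by (simp add: norm_mult del: of_real_add)
    have sts: "st s = - s" unfolding s_def by (simp add: st_sc sc_minusl)
    have com: "s * u = u * s" unfolding s_def by (simp add: sc_1l sc_1r)
    have ss: "s * s = - of_real (t\<^sup>2)"
      unfolding s_def sc_11 by (simp add: power2_eq_square sc_minusl sc_of_real[symmetric] mult.commute mult.left_commute)
    have "st z * z = u * u + of_real (t\<^sup>2)"
      unfolding z_def using sts stu com ss by (simp add: st_add algebra_simps)
    hence "(norm z)\<^sup>2 = norm (u * u + of_real (t\<^sup>2))" using cstar_id[of z] by simp
    also have "\<dots> \<le> norm (u * u) + norm (of_real (t\<^sup>2) :: 'a)" by (rule norm_triangle_ineq)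
    also have "\<dots> \<le> C + t\<^sup>2" unfolding C_def
      using norm_mult_ineq[of u u] by (simp add: power2_eq_square norm_of_real del: of_real_mult)
    finally have zz: "(norm z)\<^sup>2 \<le> C + t\<^sup>2" .
    have "\<bar>b + t\<bar>\<^sup>2 \<le> (norm z)\<^sup>2" by (rule power_mono[OF nb abs_ge_zero])
    hence "(b + t)\<^sup>2 \<le> C + t\<^sup>2" using zz by simp
    thus ?thesis by (simp add: power2_eq_square algebra_simps)
  qed
  have "b\<^sup>2 + 2 * b * ((C + 1) / (2 * b)) \<le> C" by (rule key)
  moreover have "2 * b * ((C + 1) / (2 * b)) = C + 1" using b0 unfolding b_def by simp
  ultimately show False by (smt (verit) zero_le_power2)
qed

end

context cstar begin

definition pevalC :: "complex poly \<Rightarrow> 'a \<Rightarrow> 'a" where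
  "pevalC q x = (\<Sum>i\<le>degree q. sc (coeff q i) (x ^ i))"

lemma pevalC_bound:
  assumes "degree q \<le> N" shows "pevalC q x = (\<Sum>i\<le>N. sc (coeff q i) (x ^ i))"
  unfolding pevalC_def
proof (rule sum.mono_neutral_cong_left)
  show "\<forall>i\<in>{..N} - {..degree q}. sc (coeff q i) (x ^ i) = 0"
    by (auto simp: coeff_eq_0)
qed (use assms in auto)

lemma pevalC_0[simp]: "pevalC 0 x = 0" unfolding pevalC_def by simp

lemma pevalC_pCons: "pevalC (pCons a p) x = sc a 1 + x * pevalC p x"
proof -
  have "pevalC (pCons a p) x = (\<Sum>i\<le>Suc (degree p). sc (coeff (pCons a p) i) (x ^ i))"
    by (rule pevalC_bound) simp
  also have "\<dots> = sc a 1 + (\<Sum>i\<le>degree p. sc (coeff p i) (x ^ Suc i))"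
    by (subst sum.atMost_Suc_shift) (simp add: add.commute)
  also have "(\<Sum>i\<le>degree p. sc (coeff p i) (x ^ Suc i)) = x * pevalC p x"
    unfolding pevalC_def by (simp add: sum_distrib_left sc_multr)
  finally show ?thesis .
qed

lemma pevalC_add: "pevalC (p + q) x = pevalC p x + pevalC q x"
proof -
  define N where "N = max (degree p) (degree q)"
  have "pevalC (p + q) x = (\<Sum>i\<le>N. sc (coeff (p + q) i) (x ^ i))"
    by (rule pevalC_bound) (simp add: N_def degree_add_le)
  also have "\<dots> = (\<Sum>i\<le>N. sc (coeff p i) (x ^ i)) + (\<Sum>i\<le>N. sc (coeff q i) (x ^ i))"
    by (simp add: sc_addl sum.distrib)
  also have "\<dots> = pevalC p x + pevalC q x"
    using pevalC_bound[of p N x] pevalC_bound[of q N x] by (simp add: N_def)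
  finally show ?thesis .
qed

lemma pevalC_smult: "pevalC (smult c p) x = sc c (pevalC p x)"
proof -
  have "pevalC (smult c p) x = (\<Sum>i\<le>degree p. sc (coeff (smult c p) i) (x ^ i))"
    by (rule pevalC_bound) (rule degree_smult_le)
  thus ?thesis unfolding pevalC_def by (simp add: sc_sum sc_assoc)
qed

lemma pevalC_mult: "pevalC (p * q) x = pevalC p x * pevalC q x"
proof (induction p)
  case 0 thus ?case by simp
next
  case (pCons a p)
  have "pevalC (pCons a p * q) x = sc a (pevalC q x) + x * pevalC (p * q) x"
    using pevalC_pCons[of 0 "p * q" x] by (simp add: pevalC_add pevalC_smult)
  also have "\<dots> = pevalC (pCons a p) x * pevalC q x"
    using pCons.IH by (simp add: pevalC_pCons distrib_right sc_1l mult.assoc)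
  finally show ?case .
qed

lemma pevalC_const: "pevalC [:c:] x = sc c 1"
  using pevalC_pCons[of c 0 x] by simp

lemma pevalC_lin: "pevalC [:- z, 1:] x = x - sc z 1"
  using pevalC_pCons[of "-z" "[:1:]" x] by (simp add: pevalC_const sc_minusl)

lemma poly_inv:
  assumes "q \<noteq> 0" "\<And>z. poly q z = 0 \<Longrightarrow> isinv (x - sc z 1)"
  shows "isinv (pevalC q x)"
  using assms
proof (induction "degree q" arbitrary: q rule: less_induct)
  case less
  show ?case
  proof (cases "degree q = 0")
    case True
    then obtain c where c: "q = [:c:]" using degree_eq_zeroE by blast
    hence "c \<noteq> 0" using less by simp
    thus ?thesis unfolding c pevalC_const by (rule isinv_sc1)
  next
    case False
    hence "\<not> constant (poly q)" by (simp add: constant_degree)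
    then obtain z where z: "poly q z = 0" using fundamental_theorem_of_algebra by blast
    hence "[:- z, 1:] dvd q" by (simp add: dvd_iff_poly_eq_0)
    then obtain r where r: "q = [:- z, 1:] * r" by (rule dvdE)
    have r0: "r \<noteq> 0" using less r by auto
    have "degree ([:- z, 1:] * r) = degree [:- z, 1:] + degree r" by (rule degree_mult_eq) (use r0 in auto)
    hence "degree q = 1 + degree r" unfolding r by simp
    hence dr: "degree r < degree q" by simp
    have "isinv (pevalC r x)"
    proof (rule less.hyps[OF dr r0])
      fix w assume "poly r w = 0"
      hence "poly q w = 0" unfolding r by simp
      thus "isinv (x - sc w 1)" by (rule less.prems)
    qed
    moreover have "isinv (x - sc z 1)" using less.prems z by blast
    ultimately show ?thesis unfolding r pevalC_mult pevalC_lin by (intro isinv_mult)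
  qed
qed

definition pevalR :: "real poly \<Rightarrow> 'a \<Rightarrow> 'a" where
  "pevalR p x = (\<Sum>i\<le>degree p. coeff p i *\<^sub>R (x ^ i))"

lemma pevalR_C: "pevalR p x = pevalC (map_poly complex_of_real p) x"
proof -
  have d: "degree (map_poly complex_of_real p) = degree p" by (rule degree_map_poly) simp
  show ?thesis unfolding pevalR_def pevalC_def d by (simp add: coeff_map_poly sc_real)
qed

lemma poly_of_real: "poly (map_poly complex_of_real p) (complex_of_real t) = complex_of_real (poly p t)"
  by (induction p) (auto simp: map_poly_pCons)

lemma pevalR_bound:
  assumes "degree q \<le> N" shows "pevalR q x = (\<Sum>i\<le>N. coeff q i *\<^sub>R (x ^ i))"
  unfolding pevalR_def
proof (rule sum.mono_neutral_cong_left)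
  show "\<forall>i\<in>{..N} - {..degree q}. coeff q i *\<^sub>R (x ^ i) = 0"
    by (auto simp: coeff_eq_0)
qed (use assms in auto)

lemma pevalR_0[simp]: "pevalR 0 x = 0" unfolding pevalR_def by simp

lemma pevalR_pCons: "pevalR (pCons a p) x = of_real a + x * pevalR p x"
proof -
  have "pevalR (pCons a p) x = (\<Sum>i\<le>Suc (degree p). coeff (pCons a p) i *\<^sub>R (x ^ i))"
    by (rule pevalR_bound) simp
  also have "\<dots> = of_real a + (\<Sum>i\<le>degree p. coeff p i *\<^sub>R (x ^ Suc i))"
    by (subst sum.atMost_Suc_shift) (simp add: add.commute of_real_def)
  also have "(\<Sum>i\<le>degree p. coeff p i *\<^sub>R (x ^ Suc i)) = x * pevalR p x"
    unfolding pevalR_def by (simp add: sum_distrib_left mult_scaleR_right)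
  finally show ?thesis .
qed

lemma pevalR_add: "pevalR (p + q) x = pevalR p x + pevalR q x"
proof -
  define N where "N = max (degree p) (degree q)"
  have "pevalR (p + q) x = (\<Sum>i\<le>N. coeff (p + q) i *\<^sub>R (x ^ i))"
    by (rule pevalR_bound) (simp add: N_def degree_add_le)
  also have "\<dots> = (\<Sum>i\<le>N. coeff p i *\<^sub>R (x ^ i)) + (\<Sum>i\<le>N. coeff q i *\<^sub>R (x ^ i))"
    by (simp add: scaleR_add_left sum.distrib)
  also have "\<dots> = pevalR p x + pevalR q x"
    using pevalR_bound[of p N x] pevalR_bound[of q N x] by (simp add: N_def)
  finally show ?thesis .
qed

lemma pevalR_smult: "pevalR (smult c p) x = c *\<^sub>R pevalR p x"
proof -
  have "pevalR (smult c p) x = (\<Sum>i\<le>degree p. coeff (smult c p) i *\<^sub>R (x ^ i))"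
    by (rule pevalR_bound) (rule degree_smult_le)
  thus ?thesis unfolding pevalR_def by (simp add: scaleR_sum_right)
qed

lemma pevalR_mult: "pevalR (p * q) x = pevalR p x * pevalR q x"
proof (induction p)
  case 0 thus ?case by simp
next
  case (pCons a p)
  have "pevalR (pCons a p * q) x = a *\<^sub>R (pevalR q x) + x * pevalR (p * q) x"
    using pevalR_pCons[of 0 "p * q" x] by (simp add: pevalR_add pevalR_smult)
  also have "\<dots> = pevalR (pCons a p) x * pevalR q x"
    using pCons.IH by (simp add: pevalR_pCons distrib_right mult.assoc scaleR_conv_of_real)
  finally show ?case .
qed

lemma pevalR_const: "pevalR [:c:] x = of_real c"
  using pevalR_pCons[of c 0 x] by simp

lemma pevalR_X: "pevalR [:0, 1:] x = x"
  using pevalR_pCons[of 0 "[:1:]" x] by (simp add: pevalR_const)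

lemma pevalR_diff: "pevalR (p - q) x = pevalR p x - pevalR q x"
  using pevalR_add[of "p - q" q x] by simp

lemma pevalR_sa: "sa x \<Longrightarrow> sa (pevalR p x)"
  unfolding pevalR_def sa_def by (simp add: st_sum st_scaleR st_power)

end

lemma weier:
  fixes f :: "real \<Rightarrow> real"
  assumes "compact K" "continuous_on K f" "e > 0"
  shows "\<exists>p. \<forall>t\<in>K. \<bar>f t - poly p t\<bar> < e"
proof -
  obtain g where g: "real_polynomial_function g" "\<And>t. t \<in> K \<Longrightarrow> \<bar>f t - g t\<bar> < e"
    using Stone_Weierstrass_real_polynomial_function[OF assms] by blast
  obtain a n where an: "g = (\<lambda>x. \<Sum>i\<le>n. a i * x ^ i)" using g(1) real_polynomial_function_iff_sum by blast
  define p where "p = (\<Sum>i\<le>n. monom (a i) i)"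
  have pg: "poly p t = g t" for t unfolding p_def an by (simp add: poly_sum poly_monom)
  have "\<forall>t\<in>K. \<bar>f t - poly p t\<bar> < e" using g(2) by (simp add: pg)
  thus ?thesis by blast
qed

context cstar begin

definition S :: "'a \<Rightarrow> real set" where "S x = {t. complex_of_real t \<in> cspectrum sc x}"

lemma S_bound: "t \<in> S x \<Longrightarrow> \<bar>t\<bar> \<le> norm x"
  using spec_bound[of "complex_of_real t" x] by (simp add: S_def)

lemma S_compact: "compact (S x)"
proof -
  have eq: "S x = complex_of_real -` cspectrum sc x" unfolding S_def by auto
  have "closed (S x)" unfolding eq
    by (rule continuous_closed_vimage[OF spec_closed]) (intro continuous_intros)
  moreover have "bounded (S x)" unfolding bounded_iff using S_bound by auto
  ultimately show ?thesis by (simp add: compact_eq_bounded_closed)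
qed


lemma spec_sa_real: assumes "sa x" "l \<in> cspectrum sc x" shows "l = complex_of_real (Re l) \<and> Re l \<in> S x"
proof -
  have e: "l = complex_of_real (Re l)" using spec_real[OF assms] by (simp add: complex_eq_iff)
  hence "complex_of_real (Re l) \<in> cspectrum sc x" using assms(2) by simp
  thus ?thesis using e unfolding S_def by simp
qed

lemma S_nonempty: "sa x \<Longrightarrow> S x \<noteq> {}"
  using ET[of x] spec_sa_real by blast

lemma NB:
  assumes x: "sa x" and M: "\<And>t. t \<in> S x \<Longrightarrow> \<bar>poly p t\<bar> \<le> M"
  shows "norm (pevalR p x) \<le> M"
proof -
  define y where "y = pevalR p x"
  have sy: "sa y" unfolding y_def using pevalR_sa[OF x] .
  obtain l where l: "l \<in> cspectrum sc y" "cmod l = norm y" using ET[OF sy] by blast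
  have lr: "l = complex_of_real (Re l)" using spec_sa_real[OF sy l(1)] by blast
  have "\<exists>t\<in>S x. poly p t = Re l"
  proof (rule ccontr)
    assume H: "\<not> ?thesis"
    define q where "q = map_poly complex_of_real p - [:l:]"
    have q0: "q \<noteq> 0"
    proof
      assume "q = 0"
      hence "map_poly complex_of_real p = [:l:]" unfolding q_def by simp
      hence "poly (map_poly complex_of_real p) z = l" for z by simp
      moreover obtain t where "t \<in> S x" using S_nonempty[OF x] by blast
      ultimately have "complex_of_real (poly p t) = complex_of_real (Re l)"
        using poly_of_real[of p t] lr by simp
      hence "poly p t = Re l" by (simp only: of_real_eq_iff)
      thus False using H \<open>t \<in> S x\<close> by blast
    qed
    have "isinv (pevalC q x)"
    proof (rule poly_inv[OF q0])
      fix z assume z: "poly q z = 0"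
      show "isinv (x - sc z 1)"
      proof (rule ccontr)
        assume "\<not> isinv (x - sc z 1)"
        hence zs: "z \<in> cspectrum sc x" by (simp add: spec_iff)
        hence zr: "z = complex_of_real (Re z)" "Re z \<in> S x" using spec_sa_real[OF x] by auto
        have "poly (map_poly complex_of_real p) z = l" using z unfolding q_def by simp
        hence "complex_of_real (poly p (Re z)) = complex_of_real (Re l)"
          using poly_of_real[of p "Re z"] zr lr by simp
        thus False using H zr by auto
      qed
    qed
    moreover have "pevalC q x = y - sc l 1"
    proof -
      have qa: "q + [:l:] = map_poly complex_of_real p" unfolding q_def by (rule diff_add_cancel)
      have "pevalC (map_poly complex_of_real p) x = pevalC q x + sc l 1"
        using pevalC_add[of q "[:l:]" x] unfolding qa pevalC_const .
      thus ?thesis unfolding y_def pevalR_C by (simp add: eq_diff_eq)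
    qed
    ultimately show False using l(1) spec_iff by simp
  qed
  then obtain t where t: "t \<in> S x" "poly p t = Re l" by blast
  have "norm y = \<bar>Re l\<bar>" using l(2) lr by (metis norm_of_real)
  thus ?thesis using M[OF t(1)] t(2) unfolding y_def by simp
qed

lemma NB_diff:
  assumes "sa x" "\<And>t. t \<in> S x \<Longrightarrow> \<bar>poly p t - poly q t\<bar> \<le> M"
  shows "norm (pevalR p x - pevalR q x) \<le> M"
  using NB[OF assms(1), of "p - q" M] assms(2) by (simp add: pevalR_diff)

definition capp :: "'a \<Rightarrow> (real \<Rightarrow> real) \<Rightarrow> 'a \<Rightarrow> bool" where
  "capp x f y \<longleftrightarrow> (\<forall>e>0. \<forall>p. (\<forall>t\<in>S x. \<bar>f t - poly p t\<bar> \<le> e) \<longrightarrow> norm (y - pevalR p x) \<le> e)"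

definition cf :: "'a \<Rightarrow> (real \<Rightarrow> real) \<Rightarrow> 'a" where
  "cf x f = (THE y. capp x f y)"

lemma capp_unique:
  assumes x: "sa x" and f: "continuous_on (S x) f" and y: "capp x f y" and y': "capp x f y'"
  shows "y = y'"
proof -
  have "norm (y - y') \<le> 0 + e" if e: "e > 0" for e
  proof -
    have e2: "e/2 > 0" using e by simp
    obtain p where p: "\<forall>t\<in>S x. \<bar>f t - poly p t\<bar> < e/2" using weier[OF S_compact f e2] by blast
    hence p': "\<forall>t\<in>S x. \<bar>f t - poly p t\<bar> \<le> e/2" by (simp add: less_imp_le)
    have "norm (y - pevalR p x) \<le> e/2" "norm (y' - pevalR p x) \<le> e/2"
      using y y' e2 p' unfolding capp_def by blast+
    thus ?thesis using norm_triangle_ineq4[of "y - pevalR p x" "y' - pevalR p x"] by simp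
  qed
  hence "norm (y - y') \<le> 0" by (rule field_le_epsilon)
  thus ?thesis by simp
qed

lemma capp_exists:
  assumes x: "sa x" and f: "continuous_on (S x) f"
  shows "\<exists>y. capp x f y"
proof -
  have "\<forall>k::nat. \<exists>p. \<forall>t\<in>S x. \<bar>f t - poly p t\<bar> < 1 / real (Suc k)"
    using weier[OF S_compact f] by simp
  then obtain P where P: "\<And>k t. t \<in> S x \<Longrightarrow> \<bar>f t - poly (P k) t\<bar> < 1 / real (Suc k)" by metis
  define Y where "Y k = pevalR (P k) x" for k
  have dist: "norm (Y k - pevalR p x) \<le> 1 / real (Suc k) + e"
    if "\<forall>t\<in>S x. \<bar>f t - poly p t\<bar> \<le> e" for k p e
    unfolding Y_def
  proof (rule NB_diff[OF x])
    fix t assume t: "t \<in> S x"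
    have a: "\<bar>f t - poly p t\<bar> \<le> e" using that t by blast
    have b: "\<bar>f t - poly (P k) t\<bar> < 1 / real (Suc k)" using P[OF t] by blast
    show "\<bar>poly (P k) t - poly p t\<bar> \<le> 1 / real (Suc k) + e"
      using a b by arith
  qed
  have "Cauchy Y"
  proof (unfold Cauchy_iff, intro allI impI)
    fix e :: real assume e: "e > 0"
    obtain M where M0: "inverse (real (Suc M)) < e / 2" using reals_Archimedean[of "e/2"] e by auto
    hence M: "1 / real (Suc M) < e / 2" by (simp add: inverse_eq_divide)
    have "norm (Y m - Y n) < e" if "m \<ge> M" "n \<ge> M" for m n
    proof -
      have bn: "\<forall>t\<in>S x. \<bar>f t - poly (P n) t\<bar> \<le> 1 / real (Suc n)" using P by (auto intro: less_imp_le)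
      have "norm (Y m - Y n) \<le> 1 / real (Suc m) + 1 / real (Suc n)"
        using dist[OF bn, of m] unfolding Y_def[of n] .
      also have "1 / real (Suc m) \<le> 1 / real (Suc M)" using that by (simp add: frac_le)
      also have "1 / real (Suc n) \<le> 1 / real (Suc M)" using that by (simp add: frac_le)
      finally show ?thesis using M by simp
    qed
    thus "\<exists>M. \<forall>m\<ge>M. \<forall>n\<ge>M. norm (Y m - Y n) < e" by blast
  qed
  then obtain y where y: "Y \<longlonglongrightarrow> y" using Cauchy_convergent_iff convergent_def by blast
  have "capp x f y" unfolding capp_def
  proof (intro allI impI)
    fix e p assume e: "e > 0" and p: "\<forall>t\<in>S x. \<bar>f t - poly p t\<bar> \<le> e"
    have l1: "(\<lambda>k. norm (Y k - pevalR p x)) \<longlonglongrightarrow> norm (y - pevalR p x)"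
      by (intro tendsto_intros y)
    have l2: "(\<lambda>k. 1 / real (Suc k) + e) \<longlonglongrightarrow> 0 + e"
      by (intro tendsto_intros LIMSEQ_Suc[OF lim_const_over_n] )
    show "norm (y - pevalR p x) \<le> e"
      using LIMSEQ_le[OF l1 l2] dist[OF p] by auto
  qed
  thus ?thesis by blast
qed

lemma cf_capp: "sa x \<Longrightarrow> continuous_on (S x) f \<Longrightarrow> capp x f (cf x f)"
proof -
  assume x: "sa x" and f: "continuous_on (S x) f"
  obtain y where y: "capp x f y" using capp_exists[OF x f] by blast
  show "capp x f (cf x f)" unfolding cf_def
    by (rule theI[of "capp x f", OF y]) (rule capp_unique[OF x f _ y])
qed

lemma cf_eqI:
  assumes x: "sa x" and f: "continuous_on (S x) f"
    and ap: "\<And>d. d > 0 \<Longrightarrow> \<exists>p. (\<forall>t\<in>S x. \<bar>f t - poly p t\<bar> \<le> d) \<and> norm (y - pevalR p x) \<le> d"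
  shows "cf x f = y"
proof -
  have "capp x f y" unfolding capp_def
  proof (intro allI impI)
    fix e p assume e: "e > 0" and p: "\<forall>t\<in>S x. \<bar>f t - poly p t\<bar> \<le> e"
    have H: "norm (y - pevalR p x) \<le> e + 2 * d" if d: "d > 0" for d
    proof -
      obtain q where q: "\<forall>t\<in>S x. \<bar>f t - poly q t\<bar> \<le> d" "norm (y - pevalR q x) \<le> d" using ap[OF d] by blast
      have "norm (pevalR q x - pevalR p x) \<le> d + e"
      proof (rule NB_diff[OF x])
        fix t assume t: "t \<in> S x"
        have a: "\<bar>f t - poly p t\<bar> \<le> e" using p t by blast
        have b: "\<bar>f t - poly q t\<bar> \<le> d" using q t by blast
        show "\<bar>poly q t - poly p t\<bar> \<le> d + e" using a b by arith
      qed
      thus ?thesis using q(2) norm_triangle_ineq[of "y - pevalR q x" "pevalR q x - pevalR p x"] by simp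
    qed
    have "norm (y - pevalR p x) \<le> e + d" if "d > 0" for d using H[of "d/2"] that by simp
    thus "norm (y - pevalR p x) \<le> e" by (rule field_le_epsilon)
  qed
  thus ?thesis using capp_unique[OF x f] cf_capp[OF x f] by metis
qed

lemma cf_approx:
  assumes "sa x" "continuous_on (S x) f" "d > 0"
  shows "\<exists>p. (\<forall>t\<in>S x. \<bar>f t - poly p t\<bar> \<le> d) \<and> norm (cf x f - pevalR p x) \<le> d"
proof -
  obtain p where "\<forall>t\<in>S x. \<bar>f t - poly p t\<bar> < d" using weier[OF S_compact assms(2,3)] by blast
  hence p: "\<forall>t\<in>S x. \<bar>f t - poly p t\<bar> \<le> d" by (auto intro: less_imp_le)
  thus ?thesis using cf_capp[OF assms(1,2)] assms(3) unfolding capp_def by blast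
qed

lemma cf_cong:
  assumes "\<And>t. t \<in> S x \<Longrightarrow> f t = g t"
  shows "cf x f = cf x g"
proof -
  have "capp x f = capp x g" unfolding capp_def[abs_def] using assms by (intro ext) auto
  thus ?thesis unfolding cf_def by simp
qed

lemma cf_poly: "sa x \<Longrightarrow> cf x (poly p) = pevalR p x"
  by (rule cf_eqI) (auto intro!: exI[of _ p] continuous_intros)

lemma cf_const: "sa x \<Longrightarrow> cf x (\<lambda>_. c) = of_real c"
proof -
  have "poly [:c:] = (\<lambda>_. c)" by (rule ext) simp
  thus "sa x \<Longrightarrow> cf x (\<lambda>_. c) = of_real c" using cf_poly[of x "[:c:]"] by (simp add: pevalR_const)
qed

lemma cf_id: "sa x \<Longrightarrow> cf x (\<lambda>t. t) = x"
proof -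
  have "poly [:0, 1:] = (\<lambda>t::real. t)" by (simp add: fun_eq_iff)
  thus "sa x \<Longrightarrow> cf x (\<lambda>t. t) = x" using cf_poly[of x "[:0, 1:]"] by (simp add: pevalR_X)
qed

lemma cf_dist:
  assumes x: "sa x" and f: "continuous_on (S x) f" and g: "continuous_on (S x) g"
    and d: "\<And>t. t \<in> S x \<Longrightarrow> \<bar>f t - g t\<bar> \<le> D"
  shows "norm (cf x f - cf x g) \<le> D"
proof -
  have H: "norm (cf x f - cf x g) \<le> D + 2 * e" if e: "e > 0" for e
  proof -
    obtain p where p: "\<forall>t\<in>S x. \<bar>f t - poly p t\<bar> \<le> e" "norm (cf x f - pevalR p x) \<le> e"
      using cf_approx[OF x f e] by blast
    have gp: "\<forall>t\<in>S x. \<bar>g t - poly p t\<bar> \<le> D + e"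
    proof
      fix t assume t: "t \<in> S x"
      have a: "\<bar>f t - poly p t\<bar> \<le> e" using p(1) t by blast
      show "\<bar>g t - poly p t\<bar> \<le> D + e" using a d[OF t] by arith
    qed
    obtain t0 where "t0 \<in> S x" using S_nonempty[OF x] by blast
    hence "D \<ge> 0" using d[of t0] by (meson abs_ge_zero order_trans)
    hence De: "D + e > 0" using e by simp
    have "norm (cf x g - pevalR p x) \<le> D + e" using cf_capp[OF x g] De gp unfolding capp_def by blast
    thus ?thesis using p(2) norm_triangle_ineq4[of "cf x f - pevalR p x" "cf x g - pevalR p x"] by simp
  qed
  have "norm (cf x f - cf x g) \<le> D + e" if "e > 0" for e using H[of "e/2"] that by simp
  thus ?thesis by (rule field_le_epsilon)
qed

end

context cstar begin

lemma cont_bound: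
  fixes f :: "real \<Rightarrow> real"
  assumes "continuous_on (S x) f"
  obtains B where "B > 0" "\<And>t. t \<in> S x \<Longrightarrow> \<bar>f t\<bar> \<le> B"
proof -
  have "bounded (f ` S x)" by (rule compact_imp_bounded[OF compact_continuous_image[OF assms S_compact]])
  then obtain B where "B > 0" "\<forall>y\<in>f ` S x. norm y \<le> B" unfolding bounded_pos by blast
  thus ?thesis using that by auto
qed

lemma cf_add:
  assumes x: "sa x" and f: "continuous_on (S x) f" and g: "continuous_on (S x) g"
  shows "cf x (\<lambda>t. f t + g t) = cf x f + cf x g"
proof (rule cf_eqI[OF x])
  show "continuous_on (S x) (\<lambda>t. f t + g t)" using f g by (intro continuous_intros)
  fix d :: real assume d: "d > 0"
  hence d2: "d/2 > 0" by simp
  obtain p where p: "\<forall>t\<in>S x. \<bar>f t - poly p t\<bar> \<le> d/2" "norm (cf x f - pevalR p x) \<le> d/2"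
    using cf_approx[OF x f d2] by blast
  obtain q where q: "\<forall>t\<in>S x. \<bar>g t - poly q t\<bar> \<le> d/2" "norm (cf x g - pevalR q x) \<le> d/2"
    using cf_approx[OF x g d2] by blast
  have "\<forall>t\<in>S x. \<bar>f t + g t - poly (p + q) t\<bar> \<le> d"
  proof
    fix t assume t: "t \<in> S x"
    have a: "\<bar>f t - poly p t\<bar> \<le> d/2" "\<bar>g t - poly q t\<bar> \<le> d/2" using p(1) q(1) t by blast+
    have "\<bar>f t + g t - poly (p + q) t\<bar> = \<bar>(f t - poly p t) + (g t - poly q t)\<bar>"
      by (simp add: poly_add algebra_simps)
    also have "\<dots> \<le> \<bar>f t - poly p t\<bar> + \<bar>g t - poly q t\<bar>" by (rule abs_triangle_ineq)
    finally show "\<bar>f t + g t - poly (p + q) t\<bar> \<le> d" using a by simp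
  qed
  moreover have "norm (cf x f + cf x g - pevalR (p + q) x) \<le> d"
  proof -
    have "cf x f + cf x g - pevalR (p + q) x = (cf x f - pevalR p x) + (cf x g - pevalR q x)"
      by (simp add: pevalR_add)
    hence "norm (cf x f + cf x g - pevalR (p + q) x) \<le> norm (cf x f - pevalR p x) + norm (cf x g - pevalR q x)"
      by (simp only: norm_triangle_ineq)
    thus ?thesis using p(2) q(2) by simp
  qed
  ultimately show "\<exists>p. (\<forall>t\<in>S x. \<bar>f t + g t - poly p t\<bar> \<le> d) \<and> norm (cf x f + cf x g - pevalR p x) \<le> d"
    by blast
qed

lemma cf_scale:
  assumes x: "sa x" and f: "continuous_on (S x) f"
  shows "cf x (\<lambda>t. c * f t) = c *\<^sub>R cf x f"
proof (rule cf_eqI[OF x])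
  show "continuous_on (S x) (\<lambda>t. c * f t)" using f by (intro continuous_intros)
  fix d :: real assume d: "d > 0"
  define \<eta> where "\<eta> = d / (\<bar>c\<bar> + 1)"
  have c1: "\<bar>c\<bar> + 1 > 0" by (simp add: add_nonneg_pos)
  have \<eta>: "\<eta> > 0" unfolding \<eta>_def using d c1 by simp
  have c\<eta>: "\<bar>c\<bar> * \<eta> \<le> d"
  proof -
    have "\<bar>c\<bar> * \<eta> \<le> (\<bar>c\<bar> + 1) * \<eta>" using \<eta> by (intro mult_right_mono) auto
    also have "\<dots> = d" unfolding \<eta>_def using c1 by simp
    finally show ?thesis .
  qed
  obtain p where p: "\<forall>t\<in>S x. \<bar>f t - poly p t\<bar> \<le> \<eta>" "norm (cf x f - pevalR p x) \<le> \<eta>"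
    using cf_approx[OF x f \<eta>] by blast
  have "\<forall>t\<in>S x. \<bar>c * f t - poly (smult c p) t\<bar> \<le> d"
  proof
    fix t assume t: "t \<in> S x"
    have "\<bar>c * f t - poly (smult c p) t\<bar> = \<bar>c\<bar> * \<bar>f t - poly p t\<bar>"
      by (simp add: abs_mult[symmetric] right_diff_distrib)
    also have "\<dots> \<le> \<bar>c\<bar> * \<eta>" using p(1) t by (intro mult_left_mono) auto
    finally show "\<bar>c * f t - poly (smult c p) t\<bar> \<le> d" using c\<eta> by simp
  qed
  moreover have "norm (c *\<^sub>R cf x f - pevalR (smult c p) x) \<le> d"
  proof -
    have "c *\<^sub>R cf x f - pevalR (smult c p) x = c *\<^sub>R (cf x f - pevalR p x)"
      by (simp add: pevalR_smult scaleR_diff_right)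
    hence "norm (c *\<^sub>R cf x f - pevalR (smult c p) x) = \<bar>c\<bar> * norm (cf x f - pevalR p x)" by simp
    also have "\<dots> \<le> \<bar>c\<bar> * \<eta>" using p(2) by (intro mult_left_mono) auto
    finally show ?thesis using c\<eta> by simp
  qed
  ultimately show "\<exists>p. (\<forall>t\<in>S x. \<bar>c * f t - poly p t\<bar> \<le> d) \<and> norm (c *\<^sub>R cf x f - pevalR p x) \<le> d"
    by blast
qed

lemma cf_zero: "sa x \<Longrightarrow> cf x (\<lambda>_. 0) = 0"
  using cf_const[of x 0] by simp

lemma cf_diff:
  assumes x: "sa x" and f: "continuous_on (S x) f" and g: "continuous_on (S x) g"
  shows "cf x (\<lambda>t. f t - g t) = cf x f - cf x g"
proof -
  have "cf x (\<lambda>t. f t + (-1) * g t) = cf x f + cf x (\<lambda>t. (-1) * g t)"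
    using f g by (intro cf_add[OF x]) (auto intro: continuous_intros)
  also have "cf x (\<lambda>t. (-1) * g t) = - cf x g" using cf_scale[OF x g, of "-1"] by simp
  finally show ?thesis by simp
qed

lemma cf_norm_bound:
  assumes x: "sa x" and f: "continuous_on (S x) f" and B: "\<And>t. t \<in> S x \<Longrightarrow> \<bar>f t\<bar> \<le> B"
  shows "norm (cf x f) \<le> B"
  using cf_dist[OF x f continuous_on_const, of 0 B] B by (simp add: cf_zero[OF x])

lemma cf_mult:
  assumes x: "sa x" and f: "continuous_on (S x) f" and g: "continuous_on (S x) g"
  shows "cf x (\<lambda>t. f t * g t) = cf x f * cf x g"
proof (rule cf_eqI[OF x])
  show "continuous_on (S x) (\<lambda>t. f t * g t)" using f g by (intro continuous_intros)
  obtain B1 where B1: "B1 > 0" "\<And>t. t \<in> S x \<Longrightarrow> \<bar>f t\<bar> \<le> B1" using cont_bound[OF f] by blast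
  obtain B2 where B2: "B2 > 0" "\<And>t. t \<in> S x \<Longrightarrow> \<bar>g t\<bar> \<le> B2" using cont_bound[OF g] by blast
  define B where "B = B1 + B2"
  have B: "B > 0" "\<And>t. t \<in> S x \<Longrightarrow> \<bar>f t\<bar> \<le> B" "\<And>t. t \<in> S x \<Longrightarrow> \<bar>g t\<bar> \<le> B"
    unfolding B_def using B1 B2 by force+
  have nf: "norm (cf x f) \<le> B" using cf_norm_bound[OF x f B(2)] .
  fix d :: real assume d: "d > 0"
  define \<eta> where "\<eta> = min 1 (d / (2 * B + 1))"
  have Bp: "2 * B + 1 > 0" using B by simp
  have \<eta>: "\<eta> > 0" "\<eta> \<le> 1" "\<eta> * (2 * B + 1) \<le> d" unfolding \<eta>_def using d Bp
    by (auto simp: min_def le_divide_eq)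
  obtain p where p: "\<forall>t\<in>S x. \<bar>f t - poly p t\<bar> \<le> \<eta>" "norm (cf x f - pevalR p x) \<le> \<eta>"
    using cf_approx[OF x f \<eta>(1)] by blast
  obtain q where q: "\<forall>t\<in>S x. \<bar>g t - poly q t\<bar> \<le> \<eta>" "norm (cf x g - pevalR q x) \<le> \<eta>"
    using cf_approx[OF x g \<eta>(1)] by blast
  have key: "\<bar>a * b - c * e\<bar> \<le> \<eta> * (2 * B + 1)"
    if "\<bar>a\<bar> \<le> B" "\<bar>e\<bar> \<le> B + \<eta>" "\<bar>a - c\<bar> \<le> \<eta>" "\<bar>b - e\<bar> \<le> \<eta>" for a b c e :: real
  proof -
    have "a * b - c * e = a * (b - e) + (a - c) * e" by (simp add: algebra_simps)
    hence "\<bar>a * b - c * e\<bar> \<le> \<bar>a\<bar> * \<bar>b - e\<bar> + \<bar>a - c\<bar> * \<bar>e\<bar>"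
      by (metis abs_mult abs_triangle_ineq)
    also have "\<dots> \<le> B * \<eta> + \<eta> * (B + \<eta>)"
      using that \<eta> by (intro add_mono mult_mono) auto
    also have "\<dots> \<le> \<eta> * (2 * B + 1)" using \<eta> by (simp add: algebra_simps mult_left_le)
    finally show ?thesis .
  qed
  have "\<forall>t\<in>S x. \<bar>f t * g t - poly (p * q) t\<bar> \<le> d"
  proof
    fix t assume t: "t \<in> S x"
    have a: "\<bar>f t - poly p t\<bar> \<le> \<eta>" "\<bar>g t - poly q t\<bar> \<le> \<eta>" using p(1) q(1) t by blast+
    have "\<bar>poly q t\<bar> \<le> B + \<eta>" using a(2) B(3)[OF t] by arith
    hence "\<bar>f t * g t - poly p t * poly q t\<bar> \<le> \<eta> * (2 * B + 1)" using key B(2)[OF t] a by blast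
    thus "\<bar>f t * g t - poly (p * q) t\<bar> \<le> d" using \<eta>(3) by simp
  qed
  moreover have "norm (cf x f * cf x g - pevalR (p * q) x) \<le> d"
  proof -
    have nq: "norm (pevalR q x) \<le> B + \<eta>"
      using cf_norm_bound[OF x g B(3)] q(2) norm_triangle_ineq2[of "pevalR q x" "cf x g"]
      by (simp add: norm_minus_commute)
    have "cf x f * cf x g - pevalR (p * q) x
        = cf x f * (cf x g - pevalR q x) + (cf x f - pevalR p x) * pevalR q x"
      by (simp add: pevalR_mult algebra_simps)
    hence "norm (cf x f * cf x g - pevalR (p * q) x)
        \<le> norm (cf x f) * norm (cf x g - pevalR q x) + norm (cf x f - pevalR p x) * norm (pevalR q x)"
      by (metis norm_triangle_le norm_mult_ineq add_mono)
    also have "\<dots> \<le> B * \<eta> + \<eta> * (B + \<eta>)"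
      using nf q(2) p(2) nq \<eta> B(1) by (intro add_mono mult_mono) auto
    also have "\<dots> \<le> \<eta> * (2 * B + 1)" using \<eta> by (simp add: algebra_simps mult_left_le)
    finally show ?thesis using \<eta>(3) by simp
  qed
  ultimately show "\<exists>p. (\<forall>t\<in>S x. \<bar>f t * g t - poly p t\<bar> \<le> d) \<and> norm (cf x f * cf x g - pevalR p x) \<le> d"
    by blast
qed

end

context cstar begin

lemma cf_st:
  assumes x: "sa x" and f: "continuous_on (S x) f"
  shows "st (cf x f) = cf x f"
proof -
  have H: "norm (st (cf x f) - cf x f) \<le> 0 + e" if e: "e > 0" for e
  proof -
    have e2: "e/2 > 0" using e by simp
    obtain p where p: "norm (cf x f - pevalR p x) \<le> e/2" using cf_approx[OF x f e2] by blast
    have sp: "st (pevalR p x) = pevalR p x" using pevalR_sa[OF x] unfolding sa_def .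
    have "st (cf x f) - cf x f = st (cf x f - pevalR p x) - (cf x f - pevalR p x)"
      by (simp add: st_diff sp)
    hence "norm (st (cf x f) - cf x f) \<le> norm (st (cf x f - pevalR p x)) + norm (cf x f - pevalR p x)"
      by (simp only: norm_triangle_ineq4)
    thus ?thesis using p by simp
  qed
  have "norm (st (cf x f) - cf x f) \<le> 0" by (rule field_le_epsilon) (rule H)
  thus ?thesis by simp
qed

lemma cf_sa: "sa x \<Longrightarrow> continuous_on (S x) f \<Longrightarrow> sa (cf x f)"
  using cf_st unfolding sa_def[of "cf x f"] by blast

lemma cf_one: "sa x \<Longrightarrow> cf x (\<lambda>_. 1) = 1"
  using cf_const[of x 1] by simp

lemma cf_pow:
  assumes x: "sa x" and f: "continuous_on (S x) f"
  shows "cf x (\<lambda>t. f t ^ n) = (cf x f) ^ n"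
proof (induction n)
  case 0 thus ?case using cf_one[OF x] by simp
next
  case (Suc n)
  have "cf x (\<lambda>t. f t ^ Suc n) = cf x (\<lambda>t. f t * f t ^ n)" by simp
  also have "\<dots> = cf x f * cf x (\<lambda>t. f t ^ n)"
    using f by (intro cf_mult[OF x]) (auto intro: continuous_intros)
  finally show ?case using Suc by simp
qed

lemma cf_comp_poly:
  assumes x: "sa x" and f: "continuous_on (S x) f"
  shows "cf x (\<lambda>t. poly p (f t)) = pevalR p (cf x f)"
proof (induction p)
  case 0 thus ?case using cf_zero[OF x] by simp
next
  case (pCons a p)
  have "cf x (\<lambda>t. poly (pCons a p) (f t)) = cf x (\<lambda>t. a + f t * poly p (f t))" by simp
  also have "\<dots> = cf x (\<lambda>_. a) + cf x (\<lambda>t. f t * poly p (f t))"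
    using f by (intro cf_add[OF x]) (auto intro: continuous_intros)
  also have "cf x (\<lambda>t. f t * poly p (f t)) = cf x f * cf x (\<lambda>t. poly p (f t))"
    using f by (intro cf_mult[OF x]) (auto intro: continuous_intros)
  finally show ?case using pCons.IH cf_const[OF x] by (simp add: pevalR_pCons)
qed

lemma cf_comm:
  assumes x: "sa x" and f: "continuous_on (S x) f" and g: "continuous_on (S x) g"
  shows "cf x f * cf x g = cf x g * cf x f"
  using cf_mult[OF x f g] cf_mult[OF x g f] by (simp add: mult.commute)

lemma cf_pos:
  assumes x: "sa x" and f: "continuous_on (S x) f" and nn: "\<And>t. t \<in> S x \<Longrightarrow> f t \<ge> 0"
  shows "cpositive st sc (cf x f)"
  unfolding cpositive_def
proof
  show "st (cf x f) = cf x f" by (rule cf_st[OF x f])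
  show "cspectrum sc (cf x f) \<subseteq> complex_of_real ` {0..}"
  proof
    fix l assume l: "l \<in> cspectrum sc (cf x f)"
    have lr: "l = complex_of_real (Re l)" using spec_sa_real[OF cf_sa[OF x f] l] by blast
    have "Re l \<ge> 0"
    proof (rule ccontr)
      assume "\<not> Re l \<ge> 0"
      hence r: "Re l < 0" by simp
      define r where "r = Re l"
      have pos: "t \<in> S x \<Longrightarrow> f t - r > 0" for t using nn[of t] r unfolding r_def by simp
      define g where "g t = 1 / (f t - r)" for t
      have g: "continuous_on (S x) g" unfolding g_def using f pos
        by (intro continuous_intros) (auto simp: less_irrefl)
      have fr: "continuous_on (S x) (\<lambda>t. f t - r)" using f by (intro continuous_intros)
      have slr: "sc l 1 = of_real r" unfolding r_def by (subst lr) (rule sc_of_real)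
      have e1: "cf x (\<lambda>t. f t - r) = cf x f - sc l 1"
        using cf_diff[OF x f continuous_on_const, of r] cf_const[OF x, of r] slr by simp
      have one: "cf x (\<lambda>t. g t * (f t - r)) = 1"
      proof -
        have "cf x (\<lambda>t. g t * (f t - r)) = cf x (\<lambda>_. 1)"
          by (rule cf_cong) (use pos in \<open>auto simp: g_def\<close>)
        thus ?thesis using cf_one[OF x] by simp
      qed
      have "cf x g * (cf x f - sc l 1) = 1" using cf_mult[OF x g fr] one e1 by simp
      moreover have "(cf x f - sc l 1) * cf x g = 1"
        using cf_mult[OF x g fr] one e1 cf_comm[OF x g fr] by simp
      ultimately have "isinv (cf x f - sc l 1)" unfolding isinv_def by blast
      thus False using l spec_iff by blast
    qed
    thus "l \<in> complex_of_real ` {0..}" using lr by auto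
  qed
qed

end

context cstar begin

lemma cf_nonzero:
  assumes x: "sa x" and g: "continuous_on (S x) g" and t0: "t0 \<in> S x" and g0: "g t0 \<noteq> 0"
  shows "cf x g \<noteq> 0"
proof
  assume cg: "cf x g = 0"
  define c where "c = \<bar>g t0\<bar>"
  have c: "c > 0" using g0 unfolding c_def by simp
  obtain \<delta> where \<delta>: "\<delta> > 0" "\<And>t. t \<in> S x \<Longrightarrow> dist t t0 < \<delta> \<Longrightarrow> dist (g t) (g t0) < c/2"
    using g t0 c unfolding continuous_on_iff by (meson half_gt_zero)
  define r where "r t = 1 / max ((t - t0)\<^sup>2) (\<delta>\<^sup>2 / 4)" for t
  define \<psi> where "\<psi> t = 1 - (t - t0)\<^sup>2 * r t" for t
  define \<rho> where "\<rho> t = \<psi> t * g t / max ((g t)\<^sup>2) (c\<^sup>2 / 4)" for t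
  have mpos: "max ((t - t0)\<^sup>2) (\<delta>\<^sup>2 / 4) > 0" for t using \<delta> by (simp add: less_max_iff_disj)
  have mpos2: "max ((g t)\<^sup>2) (c\<^sup>2 / 4) > 0" for t using c by (simp add: less_max_iff_disj)
  have mne: "max ((t - t0)\<^sup>2) (\<delta>\<^sup>2 / 4) \<noteq> 0" for t using mpos[of t] by linarith
  have mne2: "max ((g t)\<^sup>2) (c\<^sup>2 / 4) \<noteq> 0" for t using mpos2[of t] by linarith
  have cr: "continuous_on (S x) r" unfolding r_def using mne
    by (intro continuous_intros) auto
  have c\<psi>: "continuous_on (S x) \<psi>" unfolding \<psi>_def using cr by (intro continuous_intros)
  have c\<rho>: "continuous_on (S x) \<rho>" unfolding \<rho>_def using c\<psi> g mne2
    by (intro continuous_intros) auto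
  have sq: "continuous_on (S x) (\<lambda>t. (t - t0)\<^sup>2)" by (intro continuous_intros)
  have \<psi>\<rho>: "\<psi> t = \<rho> t * g t" if t: "t \<in> S x" for t
  proof (cases "(t - t0)\<^sup>2 < \<delta>\<^sup>2 / 4")
    case True
    have eqd: "(\<delta> / 2)\<^sup>2 = \<delta>\<^sup>2 / 4" by (simp add: power_divide)
    have "\<bar>t - t0\<bar>\<^sup>2 < (\<delta> / 2)\<^sup>2" using True unfolding eqd power2_abs .
    hence "\<bar>t - t0\<bar> < \<delta> / 2" by (rule power2_less_imp_less) (use \<delta> in simp)
    hence "dist t t0 < \<delta>" unfolding dist_real_def by linarith
    hence "dist (g t) (g t0) < c/2" by (rule \<delta>(2)[OF t])
    hence "\<bar>g t - g t0\<bar> < c/2" unfolding dist_real_def .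
    hence gt: "\<bar>g t\<bar> > c/2" unfolding c_def by arith
    have "(c/2)\<^sup>2 < \<bar>g t\<bar>\<^sup>2" by (rule power_strict_mono[OF gt]) (use c in auto)
    hence "(g t)\<^sup>2 > (c/2)\<^sup>2" by simp
    hence m: "max ((g t)\<^sup>2) (c\<^sup>2 / 4) = (g t)\<^sup>2" by (simp add: power_divide)
    have "g t \<noteq> 0" using gt c by auto
    thus ?thesis unfolding \<rho>_def m by (simp add: power2_eq_square)
  next
    case False
    hence "r t = 1 / (t - t0)\<^sup>2" unfolding r_def by simp
    moreover have "(t - t0)\<^sup>2 \<noteq> 0" using False \<delta> by auto
    ultimately have "\<psi> t = 0" unfolding \<psi>_def by simp
    thus ?thesis unfolding \<rho>_def by simp
  qed
  have "cf x \<psi> = cf x (\<lambda>t. \<rho> t * g t)" by (rule cf_cong) (use \<psi>\<rho> in auto)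
  also have "\<dots> = cf x \<rho> * cf x g" by (rule cf_mult[OF x c\<rho> g])
  finally have cpsi: "cf x \<psi> = 0" using cg by simp
  define u where "u = x - of_real t0"
  have cu: "cf x (\<lambda>t. t - t0) = u"
    unfolding u_def using cf_diff[OF x continuous_on_id continuous_on_const, of t0] cf_id[OF x] cf_const[OF x, of t0]
    by simp
  have cu2: "cf x (\<lambda>t. (t - t0)\<^sup>2) = u * u"
    using cf_pow[OF x, of "\<lambda>t. t - t0" 2] cu by (simp add: power2_eq_square continuous_intros)
  have "cf x (\<lambda>t. (t - t0)\<^sup>2 * r t) = cf x (\<lambda>t. 1 - \<psi> t)" unfolding \<psi>_def by simp
  also have "\<dots> = 1 - cf x \<psi>" using cf_diff[OF x continuous_on_const c\<psi>, of 1] cf_one[OF x] by simp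
  finally have e1: "cf x (\<lambda>t. (t - t0)\<^sup>2 * r t) = 1" using cpsi by simp
  have A: "u * u * cf x r = 1" using cf_mult[OF x sq cr] e1 cu2 by simp
  have B: "cf x r * (u * u) = 1" using A cf_comm[OF x sq cr] cu2 by simp
  have "isinv (u * u)" unfolding isinv_def using A B by blast
  have cm: "cf x r * u = u * cf x r"
    using cf_comm[OF x cr, of "\<lambda>t. t - t0"] cu by (simp add: continuous_intros)
  have "(u * cf x r) * u = u * (cf x r * u)" by (simp only: mult.assoc)
  also have "\<dots> = u * (u * cf x r)" using cm by simp
  also have "\<dots> = 1" using A by (simp only: mult.assoc)
  finally have "(u * cf x r) * u = 1" .
  moreover have "u * (u * cf x r) = 1" using A by (simp add: mult.assoc)
  ultimately have "isinv u" unfolding isinv_def by blast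
  moreover have "u = x - sc (complex_of_real t0) 1" unfolding u_def by (simp add: sc_of_real)
  ultimately show False using t0 unfolding S_def spec_iff by simp
qed

end

context cstar begin

lemma S_pos: "cpositive st sc b \<Longrightarrow> t \<in> S b \<Longrightarrow> 0 \<le> t \<and> t \<le> norm b"
proof -
  assume b: "cpositive st sc b" and t: "t \<in> S b"
  hence "complex_of_real t \<in> complex_of_real ` {0..}" unfolding S_def cpositive_def by blast
  hence "0 \<le> t" by (auto simp: of_real_eq_iff)
  moreover have "t \<le> norm b" using S_bound[OF t] by simp
  ultimately show ?thesis by simp
qed

lemma root_unique:
  assumes x: "sa x" and f: "continuous_on (S x) f" and nn: "\<And>t. t \<in> S x \<Longrightarrow> f t \<ge> 0"
    and m: "m > 0" and b: "cpositive st sc b" and bm: "b ^ m = cf x f"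
  shows "b = cf x (\<lambda>t. root m (f t))"
proof -
  have sb: "sa b" using b unfolding cpositive_def sa_def by blast
  obtain B where B: "B > 0" "\<And>t. t \<in> S x \<Longrightarrow> \<bar>f t\<bar> \<le> B" using cont_bound[OF f] by blast
  define M where "M = max (norm b ^ m) B"
  have crf: "continuous_on (S x) (\<lambda>t. root m (f t))" using f by (intro continuous_intros)
  have H: "norm (b - cf x (\<lambda>t. root m (f t))) \<le> 0 + 2 * e" if e: "e > 0" for e
  proof -
    have "continuous_on {0..M} (root m)" by (intro continuous_intros)
    then obtain p where p: "\<forall>y\<in>{0..M}. \<bar>root m y - poly p y\<bar> < e" using weier[OF compact_Icc _ e] by blast
    have cpb: "continuous_on (S b) (\<lambda>t. t ^ m)" by (intro continuous_intros)
    have E1: "cf b (\<lambda>t. poly p (t ^ m)) = pevalR p (b ^ m)"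
      using cf_comp_poly[OF sb cpb, of p] cf_pow[OF sb continuous_on_id, of m] cf_id[OF sb] by simp
    have E2: "cf x (\<lambda>t. poly p (f t)) = pevalR p (cf x f)" by (rule cf_comp_poly[OF x f])
    have d1: "norm (cf b (\<lambda>t. t) - cf b (\<lambda>t. poly p (t ^ m))) \<le> e"
    proof (rule cf_dist[OF sb continuous_on_id])
      show "continuous_on (S b) (\<lambda>t. poly p (t ^ m))" by (intro continuous_intros)
      fix t assume t: "t \<in> S b"
      have t0: "0 \<le> t" "t \<le> norm b" using S_pos[OF b t] by auto
      have "t ^ m \<le> norm b ^ m" using t0 by (intro power_mono) auto
      hence "t ^ m \<in> {0..M}" using t0 unfolding M_def by auto
      hence "\<bar>root m (t ^ m) - poly p (t ^ m)\<bar> < e" using p by blast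
      thus "\<bar>t - poly p (t ^ m)\<bar> \<le> e" using real_root_power_cancel[OF m t0(1)] by simp
    qed
    have d2: "norm (cf x (\<lambda>t. root m (f t)) - cf x (\<lambda>t. poly p (f t))) \<le> e"
    proof (rule cf_dist[OF x crf])
      show "continuous_on (S x) (\<lambda>t. poly p (f t))" using f by (intro continuous_intros)
      fix t assume t: "t \<in> S x"
      have "f t \<in> {0..M}" using nn[OF t] B(2)[OF t] unfolding M_def by auto
      hence "\<bar>root m (f t) - poly p (f t)\<bar> < e" using p by blast
      thus "\<bar>root m (f t) - poly p (f t)\<bar> \<le> e" by simp
    qed
    have eqE: "cf b (\<lambda>t. poly p (t ^ m)) = cf x (\<lambda>t. poly p (f t))" using E1 E2 bm by simp
    have eqb: "b - cf x (\<lambda>t. root m (f t)) = (cf b (\<lambda>t. t) - cf b (\<lambda>t. poly p (t ^ m)))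
        - (cf x (\<lambda>t. root m (f t)) - cf x (\<lambda>t. poly p (f t)))"
      using eqE cf_id[OF sb] by simp
    have "norm (b - cf x (\<lambda>t. root m (f t)))
        \<le> norm (cf b (\<lambda>t. t) - cf b (\<lambda>t. poly p (t ^ m))) + norm (cf x (\<lambda>t. root m (f t)) - cf x (\<lambda>t. poly p (f t)))"
      unfolding eqb by (rule norm_triangle_ineq4)
    thus ?thesis using d1 d2 by simp
  qed
  have H2: "norm (b - cf x (\<lambda>t. root m (f t))) \<le> 0 + e" if "e > 0" for e
    using H[of "e/2"] that by simp
  have "norm (b - cf x (\<lambda>t. root m (f t))) \<le> 0"
    by (rule field_le_epsilon) (rule H2)
  thus ?thesis by simp
qed

lemma proot_cf:
  assumes x: "sa x" and f: "continuous_on (S x) f" and nn: "\<And>t. t \<in> S x \<Longrightarrow> f t \<ge> 0"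
    and m: "m > 0"
  shows "proot st sc m (cf x f) = cf x (\<lambda>t. root m (f t))"
  unfolding proot_def
proof (rule the_equality)
  have crf: "continuous_on (S x) (\<lambda>t. root m (f t))" using f by (intro continuous_intros)
  show "cpositive st sc (cf x (\<lambda>t. root m (f t))) \<and> cf x (\<lambda>t. root m (f t)) ^ m = cf x f"
  proof
    show "cpositive st sc (cf x (\<lambda>t. root m (f t)))"
      by (rule cf_pos[OF x crf]) (use nn in \<open>simp add: real_root_ge_zero\<close>)
    have "cf x (\<lambda>t. root m (f t)) ^ m = cf x (\<lambda>t. root m (f t) ^ m)" by (rule cf_pow[OF x crf, symmetric])
    also have "\<dots> = cf x f" by (rule cf_cong) (use nn m in simp)
    finally show "cf x (\<lambda>t. root m (f t)) ^ m = cf x f" .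
  qed
  fix b assume "cpositive st sc b \<and> b ^ m = cf x f"
  thus "b = cf x (\<lambda>t. root m (f t))" using root_unique[OF x f nn m] by blast
qed

end

locale ctr = cstar st sc for st :: "'a::{real_normed_algebra_1,banach} \<Rightarrow> 'a" and sc +
  fixes \<tau> :: "'a \<Rightarrow> complex"
  assumes tr: "tracial_state st sc \<tau>" and fa: "faithful st \<tau>"
begin

lemma tau_add: "\<tau> (x + y) = \<tau> x + \<tau> y" using tr unfolding tracial_state_def by blast
lemma tau_sc: "\<tau> (sc c x) = c * \<tau> x" using tr unfolding tracial_state_def by blast
lemma tau_pos: "Im (\<tau> (st x * x)) = 0 \<and> Re (\<tau> (st x * x)) \<ge> 0" using tr unfolding tracial_state_def by blast
lemma tau_one: "\<tau> 1 = 1" using tr unfolding tracial_state_def by blast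
lemma tau_faithful: "\<tau> (st x * x) = 0 \<Longrightarrow> x = 0" using fa unfolding faithful_def by blast

lemma tau_zero: "\<tau> 0 = 0" using tau_add[of 0 0] by simp
lemma tau_diff: "\<tau> (x - y) = \<tau> x - \<tau> y"
  using tau_add[of "x - y" y] by (simp add: algebra_simps)
lemma tau_scaleR: "\<tau> (r *\<^sub>R x) = complex_of_real r * \<tau> x"
  using tau_sc[of "complex_of_real r" x] by (simp add: sc_real)
lemma tau_of_real: "\<tau> (of_real r) = complex_of_real r"
  using tau_scaleR[of r 1] tau_one by (simp add: of_real_def)
lemma tau_sum: "\<tau> (sum g A) = (\<Sum>i\<in>A. \<tau> (g i))"
  by (induction A rule: infinite_finite_induct) (auto simp: tau_add tau_zero)

lemma tau_cf_nonneg: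
  assumes h: "sa h" and f: "continuous_on (S h) f" and nn: "\<And>t. t \<in> S h \<Longrightarrow> f t \<ge> 0"
  shows "Im (\<tau> (cf h f)) = 0 \<and> Re (\<tau> (cf h f)) \<ge> 0"
    and "cf h f = st (cf h (\<lambda>t. sqrt (f t))) * cf h (\<lambda>t. sqrt (f t))"
proof -
  have cs: "continuous_on (S h) (\<lambda>t. sqrt (f t))" using f by (intro continuous_intros)
  have "cf h (\<lambda>t. sqrt (f t)) * cf h (\<lambda>t. sqrt (f t)) = cf h (\<lambda>t. sqrt (f t) * sqrt (f t))"
    by (rule cf_mult[OF h cs cs, symmetric])
  also have "\<dots> = cf h f" by (rule cf_cong) (use nn in simp)
  finally show e: "cf h f = st (cf h (\<lambda>t. sqrt (f t))) * cf h (\<lambda>t. sqrt (f t))"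
    using cf_st[OF h cs] by simp
  show "Im (\<tau> (cf h f)) = 0 \<and> Re (\<tau> (cf h f)) \<ge> 0" unfolding e by (rule tau_pos)
qed

lemma tau_cf_real:
  assumes h: "sa h" and f: "continuous_on (S h) f"
  shows "\<tau> (cf h f) = complex_of_real (Re (\<tau> (cf h f)))"
proof -
  obtain B where B: "B > 0" "\<And>t. t \<in> S h \<Longrightarrow> \<bar>f t\<bar> \<le> B" using cont_bound[OF f] by blast
  have fB: "continuous_on (S h) (\<lambda>t. f t + B)" using f by (intro continuous_intros)
  have nn: "f t + B \<ge> 0" if "t \<in> S h" for t using B(2)[OF that] by (simp add: abs_le_iff)
  have "Im (\<tau> (cf h (\<lambda>t. f t + B))) = 0"
    using tau_cf_nonneg(1)[OF h fB nn] by blast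
  moreover have "cf h (\<lambda>t. f t + B) = cf h f + of_real B"
    using cf_add[OF h f continuous_on_const] cf_const[OF h] by simp
  ultimately have "Im (\<tau> (cf h f)) = 0" by (simp add: tau_add tau_of_real)
  thus ?thesis by (simp add: complex_eq_iff)
qed

definition phi :: "'a \<Rightarrow> (real \<Rightarrow> real) \<Rightarrow> real" where "phi h f = Re (\<tau> (cf h f))"

lemma tau_phi: "sa h \<Longrightarrow> continuous_on (S h) f \<Longrightarrow> \<tau> (cf h f) = complex_of_real (phi h f)"
  unfolding phi_def by (rule tau_cf_real)

lemma phi_add: "sa h \<Longrightarrow> continuous_on (S h) f \<Longrightarrow> continuous_on (S h) g \<Longrightarrow>
    phi h (\<lambda>t. f t + g t) = phi h f + phi h g"
  unfolding phi_def by (simp add: cf_add tau_add)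

lemma phi_diff: "sa h \<Longrightarrow> continuous_on (S h) f \<Longrightarrow> continuous_on (S h) g \<Longrightarrow>
    phi h (\<lambda>t. f t - g t) = phi h f - phi h g"
  unfolding phi_def by (simp add: cf_diff tau_diff)

lemma phi_const: "sa h \<Longrightarrow> phi h (\<lambda>_. c) = c"
  unfolding phi_def by (simp add: cf_const tau_of_real)

lemma phi_nonneg: "sa h \<Longrightarrow> continuous_on (S h) f \<Longrightarrow> (\<And>t. t \<in> S h \<Longrightarrow> f t \<ge> 0) \<Longrightarrow> phi h f \<ge> 0"
  unfolding phi_def using tau_cf_nonneg(1) by blast

lemma phi_mono:
  assumes h: "sa h" and f: "continuous_on (S h) f" and g: "continuous_on (S h) g"
    and le: "\<And>t. t \<in> S h \<Longrightarrow> f t \<le> g t"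
  shows "phi h f \<le> phi h g"
proof -
  have "phi h (\<lambda>t. g t - f t) \<ge> 0"
    using le by (intro phi_nonneg[OF h]) (auto intro: continuous_intros f g)
  thus ?thesis using phi_diff[OF h g f] by simp
qed

lemma phi_sum:
  assumes h: "sa h" and fin: "finite C" and f: "\<And>c. c \<in> C \<Longrightarrow> continuous_on (S h) (F c)"
  shows "phi h (\<lambda>t. \<Sum>c\<in>C. F c t) = (\<Sum>c\<in>C. phi h (F c))"
  using fin f
proof (induction C rule: finite_induct)
  case empty thus ?case using phi_const[OF h, of 0] by simp
next
  case (insert c C)
  have "phi h (\<lambda>t. \<Sum>c\<in>insert c C. F c t) = phi h (\<lambda>t. F c t + (\<Sum>c\<in>C. F c t))"
    using insert by simp
  also have "\<dots> = phi h (F c) + phi h (\<lambda>t. \<Sum>c\<in>C. F c t)"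
    using insert.prems by (intro phi_add[OF h]) (auto intro!: continuous_intros)
  finally show ?case using insert by simp
qed

lemma phi_pos:
  assumes h: "sa h" and f: "continuous_on (S h) f" and nn: "\<And>t. t \<in> S h \<Longrightarrow> f t \<ge> 0"
    and t0: "t0 \<in> S h" and ft0: "f t0 > 0"
  shows "phi h f > 0"
proof -
  have cs: "continuous_on (S h) (\<lambda>t. sqrt (f t))" using f by (intro continuous_intros)
  have k0: "cf h (\<lambda>t. sqrt (f t)) \<noteq> 0" by (rule cf_nonzero[OF h cs t0]) (use ft0 in simp)
  have "\<tau> (cf h f) \<noteq> 0"
    using tau_cf_nonneg(2)[OF h f nn] tau_faithful k0 by metis
  moreover have "Im (\<tau> (cf h f)) = 0 \<and> Re (\<tau> (cf h f)) \<ge> 0" by (rule tau_cf_nonneg(1)[OF h f nn])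
  ultimately show ?thesis unfolding phi_def by (simp add: complex_eq_iff)
qed

end

lemma real_root_le_one: "x \<le> 1 \<Longrightarrow> root (Suc n) x \<le> 1"
  using real_root_le_iff[of "Suc n" x 1] by simp

lemma W_eq:
  "1 - root (Suc n) (min (max (y - c) 0) 1) - root (Suc n) (min (max (c - y) 0) 1)
   = 1 - root (Suc n) (min \<bar>y - c\<bar> 1)"
  by (cases "y \<ge> c") (auto simp: max_def)

lemma pw_bound:
  fixes C :: "real set"
  assumes fin: "finite C" and \<delta>: "0 < \<delta>" "\<delta> \<le> 1"
    and gap: "\<And>c c'. c \<in> C \<Longrightarrow> c' \<in> C \<Longrightarrow> c \<noteq> c' \<Longrightarrow> 2 * \<delta> \<le> \<bar>c - c'\<bar>"
  shows "(\<Sum>c\<in>C. 1 - root (Suc n) (min \<bar>y - c\<bar> 1)) \<le> 1 + real (card C) * (1 - root (Suc n) \<delta>)"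
proof -
  have rd: "root (Suc n) \<delta> \<le> 1" using \<delta> by (simp add: real_root_le_one)
  have each: "1 - root (Suc n) (min \<bar>y - c\<bar> 1) \<le> (if \<bar>y - c\<bar> < \<delta> then 1 else 0) + (1 - root (Suc n) \<delta>)" for c
  proof (cases "\<bar>y - c\<bar> < \<delta>")
    case True
    have r0: "0 \<le> root (Suc n) (min \<bar>y - c\<bar> 1)" by (simp add: real_root_ge_zero)
    have "1 - root (Suc n) (min \<bar>y - c\<bar> 1) \<le> 1 + (1 - root (Suc n) \<delta>)" using r0 rd by linarith
    thus ?thesis using True by simp
  next
    case False
    hence "\<delta> \<le> min \<bar>y - c\<bar> 1" using \<delta> by simp
    hence "root (Suc n) \<delta> \<le> root (Suc n) (min \<bar>y - c\<bar> 1)" by (simp add: real_root_le_iff)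
    thus ?thesis using False by simp
  qed
  have card1: "card {c \<in> C. \<bar>y - c\<bar> < \<delta>} \<le> 1"
  proof -
    have "\<forall>c1\<in>{c \<in> C. \<bar>y - c\<bar> < \<delta>}. \<forall>c2\<in>{c \<in> C. \<bar>y - c\<bar> < \<delta>}. c1 = c2"
    proof (intro ballI, rule ccontr)
      fix c1 c2 assume c1: "c1 \<in> {c \<in> C. \<bar>y - c\<bar> < \<delta>}" and c2: "c2 \<in> {c \<in> C. \<bar>y - c\<bar> < \<delta>}" and ne: "c1 \<noteq> c2"
      have "2 * \<delta> \<le> \<bar>c1 - c2\<bar>" using gap c1 c2 ne by blast
      moreover have "\<bar>c1 - c2\<bar> < 2 * \<delta>" using c1 c2 by auto
      ultimately show False by simp
    qed
    thus ?thesis using card_le_Suc0_iff_eq[of "{c \<in> C. \<bar>y - c\<bar> < \<delta>}"] fin by simp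
  qed
  have "(\<Sum>c\<in>C. 1 - root (Suc n) (min \<bar>y - c\<bar> 1))
      \<le> (\<Sum>c\<in>C. (if \<bar>y - c\<bar> < \<delta> then 1 else 0) + (1 - root (Suc n) \<delta>))"
    by (rule sum_mono) (rule each)
  also have "\<dots> = (\<Sum>c\<in>C. if \<bar>y - c\<bar> < \<delta> then 1 else 0) + real (card C) * (1 - root (Suc n) \<delta>)"
    by (simp add: sum.distrib)
  also have "(\<Sum>c\<in>C. if \<bar>y - c\<bar> < \<delta> then 1 else (0::real)) = real (card {c \<in> C. \<bar>y - c\<bar> < \<delta>})"
    using sum.inter_filter[OF fin, of "\<lambda>_. 1::real" "\<lambda>c. \<bar>y - c\<bar> < \<delta>", symmetric] by simp
  finally show ?thesis using card1 by simp
qed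

lemma gap_exists:
  fixes C :: "real set"
  assumes fin: "finite C"
  obtains \<delta> where "0 < \<delta>" "\<delta> \<le> 1" "\<And>c c'. c \<in> C \<Longrightarrow> c' \<in> C \<Longrightarrow> c \<noteq> c' \<Longrightarrow> 2 * \<delta> \<le> \<bar>c - c'\<bar>"
proof -
  define G where "G = (\<lambda>(c, c'). \<bar>c - c'\<bar> / 2) ` {p \<in> C \<times> C. fst p \<noteq> snd p}"
  have fG: "finite G" unfolding G_def using fin by auto
  define \<delta> where "\<delta> = Min (insert 1 G)"
  have "0 < \<delta>" unfolding \<delta>_def using fG by (auto simp: G_def)
  moreover have "\<delta> \<le> 1" unfolding \<delta>_def using fG by simp
  moreover have "2 * \<delta> \<le> \<bar>c - c'\<bar>" if "c \<in> C" "c' \<in> C" "c \<noteq> c'" for c c'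
  proof -
    have "\<bar>c - c'\<bar> / 2 \<in> G" unfolding G_def using that by (auto intro!: image_eqI[of _ _ "(c, c')"])
    hence "\<delta> \<le> \<bar>c - c'\<bar> / 2" unfolding \<delta>_def using fG by (intro Min_le) auto
    thus ?thesis by simp
  qed
  ultimately show ?thesis using that by blast
qed

context ctr begin

lemma main_ctr:
  assumes h: "sa h" and s: "s \<in> S h" and t: "t \<in> S h" and st: "s < t"
  shows "\<exists>l e f. 0 < l \<and> l < 1 \<and> cpositive st sc e \<and> cpositive st sc f \<and> e * f = 0
           \<and> dtau_eq st sc \<tau> e l \<and> dtau_eq st sc \<tau> f (1 - l)"
proof -
  define a where "a c y = min (max (y - c) 0) 1" for c y :: real
  define b where "b c y = min (max (c - y) 0) 1" for c y :: real
  define U where "U c n y = root (Suc n) (a c y)" for c y :: real and n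
  define V where "V c n y = root (Suc n) (b c y)" for c y :: real and n
  have ca: "continuous_on (S h) (a c)" for c unfolding a_def by (intro continuous_intros)
  have cb: "continuous_on (S h) (b c)" for c unfolding b_def by (intro continuous_intros)
  have cU: "continuous_on (S h) (U c n)" for c n unfolding U_def using ca by (intro continuous_intros)
  have cV: "continuous_on (S h) (V c n)" for c n unfolding V_def using cb by (intro continuous_intros)
  have a01: "0 \<le> a c y" "a c y \<le> 1" for c y unfolding a_def by auto
  have b01: "0 \<le> b c y" "b c y \<le> 1" for c y unfolding b_def by auto
  have U01: "0 \<le> U c n y" "U c n y \<le> 1" for c n y
    unfolding U_def using a01 by (auto simp: real_root_ge_zero real_root_le_one)
  have V01: "0 \<le> V c n y" "V c n y \<le> 1" for c n y
    unfolding V_def using b01 by (auto simp: real_root_ge_zero real_root_le_one)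
  have incU: "incseq (\<lambda>n. phi h (U c n))" for c
  proof (rule incseq_SucI)
    fix n show "phi h (U c n) \<le> phi h (U c (Suc n))"
      by (rule phi_mono[OF h cU cU]) (use a01 in \<open>simp add: U_def real_root_increasing\<close>)
  qed
  have incV: "incseq (\<lambda>n. phi h (V c n))" for c
  proof (rule incseq_SucI)
    fix n show "phi h (V c n) \<le> phi h (V c (Suc n))"
      by (rule phi_mono[OF h cV cV]) (use b01 in \<open>simp add: V_def real_root_increasing\<close>)
  qed
  have bU: "phi h (U c n) \<le> 1" for c n
    using phi_mono[OF h cU continuous_on_const, of c n 1] U01 phi_const[OF h, of 1] by simp
  have bV: "phi h (V c n) \<le> 1" for c n
    using phi_mono[OF h cV continuous_on_const, of c n 1] V01 phi_const[OF h, of 1] by simp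
  define L where "L c = lim (\<lambda>n. phi h (U c n))" for c
  define R where "R c = lim (\<lambda>n. phi h (V c n))" for c
  have LU: "(\<lambda>n. phi h (U c n)) \<longlonglongrightarrow> L c" for c
  proof -
    obtain l where "(\<lambda>n. phi h (U c n)) \<longlonglongrightarrow> l" using incseq_convergent[OF incU] bU by blast
    thus ?thesis unfolding L_def by (simp add: limI)
  qed
  have RV: "(\<lambda>n. phi h (V c n)) \<longlonglongrightarrow> R c" for c
  proof -
    obtain l where "(\<lambda>n. phi h (V c n)) \<longlonglongrightarrow> l" using incseq_convergent[OF incV] bV by blast
    thus ?thesis unfolding R_def by (simp add: limI)
  qed
  define D where "D c = 1 - L c - R c" for c
  have phiW: "phi h (\<lambda>y. 1 - U c n y - V c n y) = 1 - phi h (U c n) - phi h (V c n)" for c n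
  proof -
    have "phi h (\<lambda>y. (1 - U c n y) - V c n y) = phi h (\<lambda>y. 1 - U c n y) - phi h (V c n)"
      by (rule phi_diff[OF h]) (auto intro!: continuous_intros cU cV)
    also have "phi h (\<lambda>y. 1 - U c n y) = 1 - phi h (U c n)"
      using phi_diff[OF h continuous_on_const cU] phi_const[OF h] by simp
    finally show ?thesis by simp
  qed
  have DW: "(\<lambda>n. 1 - phi h (U c n) - phi h (V c n)) \<longlonglongrightarrow> D c" for c
    unfolding D_def by (intro tendsto_intros LU RV)
  have D0: "D c \<ge> 0" for c
  proof (rule LIMSEQ_le_const[OF DW], intro exI allI impI)
    fix n
    have "phi h (\<lambda>y. 1 - U c n y - V c n y) \<ge> 0"
    proof (rule phi_nonneg[OF h])
      show "continuous_on (S h) (\<lambda>y. 1 - U c n y - V c n y)" by (intro continuous_intros cU cV)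
      fix y show "0 \<le> 1 - U c n y - V c n y"
        unfolding U_def V_def a_def b_def W_eq by (simp add: real_root_le_one)
    qed
    thus "0 \<le> 1 - phi h (U c n) - phi h (V c n)" using phiW by simp
  qed
  have Dsum: "(\<Sum>c\<in>C. D c) \<le> 1" if fin: "finite C" for C
  proof -
    obtain \<delta> where \<delta>: "0 < \<delta>" "\<delta> \<le> 1" "\<And>c c'. c \<in> C \<Longrightarrow> c' \<in> C \<Longrightarrow> c \<noteq> c' \<Longrightarrow> 2 * \<delta> \<le> \<bar>c - c'\<bar>"
      using gap_exists[OF fin] by blast
    have l1: "(\<lambda>n. \<Sum>c\<in>C. 1 - phi h (U c n) - phi h (V c n)) \<longlonglongrightarrow> (\<Sum>c\<in>C. D c)"
      by (intro tendsto_sum DW)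
    have rt: "(\<lambda>n. root (Suc n) \<delta>) \<longlonglongrightarrow> 1"
      using LIMSEQ_Suc[OF LIMSEQ_root_const[OF \<delta>(1)]] .
    have l2: "(\<lambda>n. 1 + real (card C) * (1 - root (Suc n) \<delta>)) \<longlonglongrightarrow> 1 + real (card C) * (1 - 1)"
      by (intro tendsto_intros rt)
    have le: "(\<Sum>c\<in>C. 1 - phi h (U c n) - phi h (V c n)) \<le> 1 + real (card C) * (1 - root (Suc n) \<delta>)" for n
    proof -
      have cW: "\<And>c. c \<in> C \<Longrightarrow> continuous_on (S h) (\<lambda>y. 1 - U c n y - V c n y)"
        by (intro continuous_intros cU cV)
      have "(\<Sum>c\<in>C. 1 - phi h (U c n) - phi h (V c n)) = (\<Sum>c\<in>C. phi h (\<lambda>y. 1 - U c n y - V c n y))"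
        using phiW by simp
      also have "\<dots> = phi h (\<lambda>y. \<Sum>c\<in>C. 1 - U c n y - V c n y)"
        by (rule phi_sum[OF h fin cW, symmetric])
      also have "\<dots> \<le> phi h (\<lambda>_. 1 + real (card C) * (1 - root (Suc n) \<delta>))"
      proof (rule phi_mono[OF h _ continuous_on_const])
        show "continuous_on (S h) (\<lambda>y. \<Sum>c\<in>C. 1 - U c n y - V c n y)"
          by (intro continuous_intros cU cV)
        fix y
        have "(\<Sum>c\<in>C. 1 - U c n y - V c n y) = (\<Sum>c\<in>C. 1 - root (Suc n) (min \<bar>y - c\<bar> 1))"
          unfolding U_def V_def a_def b_def W_eq ..
        also have "\<dots> \<le> 1 + real (card C) * (1 - root (Suc n) \<delta>)" by (rule pw_bound[OF fin \<delta>])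
        finally show "(\<Sum>c\<in>C. 1 - U c n y - V c n y) \<le> 1 + real (card C) * (1 - root (Suc n) \<delta>)" .
      qed
      also have "\<dots> = 1 + real (card C) * (1 - root (Suc n) \<delta>)" by (rule phi_const[OF h])
      finally show ?thesis .
    qed
    have "(\<Sum>c\<in>C. D c) \<le> 1 + real (card C) * (1 - 1)"
      by (rule LIMSEQ_le[OF l1 l2]) (use le in auto)
    thus ?thesis by simp
  qed
  define B where "B m = {c \<in> {s<..<t}. D c > 1 / real (Suc m)}" for m :: nat
  have finB: "finite (B m)" for m
  proof (rule ccontr)
    assume "infinite (B m)"
    then obtain C where C: "finite C" "card C = Suc m" "C \<subseteq> B m" using infinite_arbitrarily_large by blast
    have "(\<Sum>c\<in>C. 1 / real (Suc m)) < (\<Sum>c\<in>C. D c)"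
      using C by (intro sum_strict_mono) (auto simp: B_def)
    moreover have "(\<Sum>c\<in>C. 1 / real (Suc m)) = 1" using C by simp
    ultimately show False using Dsum[OF C(1)] by simp
  qed
  have sub: "{c \<in> {s<..<t}. D c > 0} \<subseteq> (\<Union>m. B m)"
  proof
    fix c assume c: "c \<in> {c \<in> {s<..<t}. D c > 0}"
    then obtain m where "inverse (real (Suc m)) < D c" using reals_Archimedean by auto
    hence "c \<in> B m" using c unfolding B_def by (simp add: inverse_eq_divide)
    thus "c \<in> (\<Union>m. B m)" by blast
  qed
  have "countable (\<Union>m. B m)" using finB by (intro countable_UN) (auto intro: countable_finite)
  hence ctb: "countable {c \<in> {s<..<t}. D c > 0}" using sub countable_subset by blast
  have "\<exists>c\<in>{s<..<t}. \<not> D c > 0"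
  proof (rule ccontr)
    assume "\<not> (\<exists>c\<in>{s<..<t}. \<not> D c > 0)"
    hence "{s<..<t} \<subseteq> {c \<in> {s<..<t}. D c > 0}" by auto
    hence "countable {s<..<t}" using ctb countable_subset by blast
    thus False using uncountable_open_interval[of s t] st by simp
  qed
  then obtain c where c: "c \<in> {s<..<t}" "\<not> D c > 0" by blast
  have Dc: "D c = 0" using c(2) D0[of c] by simp
  have cs: "s < c" "c < t" using c(1) by auto
  have Lpos: "L c > 0"
  proof -
    have "phi h (U c 0) > 0"
    proof (rule phi_pos[OF h cU _ t])
      show "\<And>y. y \<in> S h \<Longrightarrow> 0 \<le> U c 0 y" using U01 by blast
      show "0 < U c 0 t" unfolding U_def a_def using cs by (simp add: real_root_gt_zero)
    qed
    moreover have "phi h (U c 0) \<le> L c" by (rule incseq_le[OF incU LU])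
    ultimately show ?thesis by simp
  qed
  have Rpos: "R c > 0"
  proof -
    have "phi h (V c 0) > 0"
    proof (rule phi_pos[OF h cV _ s])
      show "\<And>y. y \<in> S h \<Longrightarrow> 0 \<le> V c 0 y" using V01 by blast
      show "0 < V c 0 s" unfolding V_def b_def using cs by (simp add: real_root_gt_zero)
    qed
    moreover have "phi h (V c 0) \<le> R c" by (rule incseq_le[OF incV RV])
    ultimately show ?thesis by simp
  qed
  have RL: "R c = 1 - L c" using Dc unfolding D_def by simp
  define e where "e = cf h (a c)"
  define f where "f = cf h (b c)"
  have pe: "cpositive st sc e" unfolding e_def by (rule cf_pos[OF h ca]) (use a01 in blast)
  have pf: "cpositive st sc f" unfolding f_def by (rule cf_pos[OF h cb]) (use b01 in blast)
  have ef: "e * f = 0"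
  proof -
    have "e * f = cf h (\<lambda>y. a c y * b c y)" unfolding e_def f_def by (rule cf_mult[OF h ca cb, symmetric])
    also have "\<dots> = cf h (\<lambda>_. 0)" by (rule cf_cong) (auto simp: a_def b_def max_def)
    finally show ?thesis using cf_zero[OF h] by simp
  qed
  have de: "dtau_eq st sc \<tau> e (L c)" unfolding dtau_eq_def
  proof -
    have "\<tau> (proot st sc (Suc n) e) = complex_of_real (phi h (U c n))" for n
    proof -
      have "proot st sc (Suc n) e = cf h (U c n)"
        unfolding e_def U_def by (rule proot_cf[OF h ca]) (use a01 in auto)
      thus ?thesis using tau_phi[OF h cU] by simp
    qed
    thus "(\<lambda>n. \<tau> (proot st sc (Suc n) e)) \<longlonglongrightarrow> complex_of_real (L c)"
      by (simp add: tendsto_of_real LU)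
  qed
  have df: "dtau_eq st sc \<tau> f (1 - L c)" unfolding dtau_eq_def
  proof -
    have "\<tau> (proot st sc (Suc n) f) = complex_of_real (phi h (V c n))" for n
    proof -
      have "proot st sc (Suc n) f = cf h (V c n)"
        unfolding f_def V_def by (rule proot_cf[OF h cb]) (use b01 in auto)
      thus ?thesis using tau_phi[OF h cV] by simp
    qed
    moreover have "(\<lambda>n. complex_of_real (phi h (V c n))) \<longlonglongrightarrow> complex_of_real (1 - L c)"
      using tendsto_of_real[OF RV[of c]] unfolding RL .
    ultimately show "(\<lambda>n. \<tau> (proot st sc (Suc n) f)) \<longlonglongrightarrow> complex_of_real (1 - L c)"
      by simp
  qed
  have "L c < 1" using Rpos RL by simp
  thus ?thesis using Lpos pe pf ef de df by blast
qed

end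

context cstar begin

lemma nonscalar_sa:
  assumes "x \<notin> range (\<lambda>c. sc c 1)"
  shows "\<exists>h. sa h \<and> h \<notin> range (\<lambda>c. sc c 1)"
proof (rule ccontr)
  assume H: "\<not> ?thesis"
  define h1 where "h1 = (1/2) *\<^sub>R (x + st x)"
  define h2 where "h2 = sc (- \<i> / 2) (x - st x)"
  have s1: "sa h1" unfolding sa_def h1_def by (simp add: st_scaleR st_add add.commute)
  have s2: "sa h2"
  proof -
    have "st h2 = sc (\<i> / 2) (st x - x)" unfolding h2_def by (simp add: st_sc st_diff)
    also have "\<dots> = sc (\<i> / 2) (- (x - st x))" by simp
    also have "\<dots> = sc (- (\<i> / 2)) (x - st x)" by (simp only: sc_minusr sc_minusl)
    finally show ?thesis unfolding sa_def h2_def by simp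
  qed
  obtain a where a: "h1 = sc a 1" using H s1 by blast
  obtain b where b: "h2 = sc b 1" using H s2 by blast
  have half: "sc (1/2) y = (1/2) *\<^sub>R y" for y using sc_real[of "1/2" y] by simp
  have "sc \<i> h2 = sc (1/2) (x - st x)" unfolding h2_def by (simp add: sc_assoc)
  hence e2: "sc \<i> h2 = (1/2) *\<^sub>R x - (1/2) *\<^sub>R st x" unfolding half by (simp add: scaleR_diff_right)
  have "h1 + sc \<i> h2 = (1/2) *\<^sub>R x + (1/2) *\<^sub>R x" unfolding h1_def e2 by (simp add: scaleR_add_right)
  also have "\<dots> = x" by (simp add: scaleR_add_left[symmetric])
  finally have "h1 + sc \<i> h2 = x" .
  hence "x = sc (a + \<i> * b) 1" unfolding a b by (simp add: sc_assoc sc_addl)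
  thus False using assms by blast
qed

end

theorem lemma6p3:
  fixes st :: "'a::{real_normed_algebra_1,banach} \<Rightarrow> 'a"
    and sc :: "complex \<Rightarrow> 'a \<Rightarrow> 'a"
    and \<tau> :: "'a \<Rightarrow> complex"
  assumes "unital_cstar_algebra st sc"
    and "\<exists>x. x \<notin> range (\<lambda>c. sc c 1)"
    and "tracial_state st sc \<tau>"
    and "faithful st \<tau>"
  shows "\<exists>l e f. 0 < l \<and> l < 1 \<and> cpositive st sc e \<and> cpositive st sc f \<and> e * f = 0
           \<and> dtau_eq st sc \<tau> e l \<and> dtau_eq st sc \<tau> f (1 - l)"
proof -
  interpret C: ctr st sc \<tau>
    by (intro ctr.intro cstar.intro ctr_axioms.intro) (use assms in auto)
  obtain x where x: "x \<notin> range (\<lambda>c. sc c 1)" using assms(2) by blast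
  obtain h where h: "C.sa h" "h \<notin> range (\<lambda>c. sc c 1)" using C.nonscalar_sa[OF x] by blast
  obtain s where s: "s \<in> C.S h" using C.S_nonempty[OF h(1)] by blast
  have "\<exists>t\<in>C.S h. t \<noteq> s"
  proof (rule ccontr)
    assume "\<not> (\<exists>t\<in>C.S h. t \<noteq> s)"
    hence all: "\<And>t. t \<in> C.S h \<Longrightarrow> t = s" by blast
    have "norm (C.pevalR [:-s, 1:] h) \<le> 0"
      by (rule C.NB[OF h(1)]) (use all in simp)
    moreover have "C.pevalR [:-s, 1:] h = h - of_real s"
      using C.pevalR_pCons[of "-s" "[:1:]" h] C.pevalR_const[of 1 h] by simp
    ultimately have "h = of_real s" by simp
    hence "h = sc (complex_of_real s) 1" by (simp add: C.sc_of_real)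
    thus False using h(2) by blast
  qed
  then obtain t where t: "t \<in> C.S h" "t \<noteq> s" by blast
  show ?thesis
  proof (cases "s < t")
    case True thus ?thesis using C.main_ctr[OF h(1) s t(1)] by blast
  next
    case False
    hence "t < s" using t(2) by simp
    thus ?thesis using C.main_ctr[OF h(1) t(1) s] by blast
  qed
qed

end
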